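(* Let $k$ be an unramified non-archimedean local field of residue characteristic $2$ (so $e=1$ and we take $\varpi=2$). Let $B(x)=x_1^2+x_2^2-a(x_3^2+x_4^2)$ on $k^4$, where $a=1+2u$, $u$ is a unit, and the Hilbert symbol $(a,-1)=-1$. Let $z=q^{-\beta}$, $w=zq^{-1}$, and $t\in\mathfrak o\setminus\{0\}$ with $|t|=q^{-T}$. Then \[ X^B(\beta;1)=\frac{|2|}{1-w}, \] and, if $T\ge1$, \[ X^B(\beta;t^2)=\frac{|2|}{1-wq^{-1}}+w^{2T}q^{-2T}\,\frac{1-wq^{-2}}{(1-w)(1-wq^{-1})}. \]
   Context: $k$ has ring of integers $\mathfrak o$, residue field of cardinality $q$, absolute value normalized by $|2|=q^{-1}$. On $\mathfrak o^n$ use the additive Haar measure of total mass $1$. For a quadratic form $B$ on $k^n$, $\rho\in\mathfrak o$ and integer $\ell\ge0$: $X_\ell^B(\rho)=\operatorname{meas}\{x\in\mathfrak o^n: B(x)-\rho\in 2^{\ell+1}\mathfrak o\}$ and $X^B(\beta;\rho)=\sum_{\ell\ge0}z^\ell X_\ell^B(\rho)$ with $z=q^{-\beta}$. $(\cdot,\cdot)$ is the Hilbert symbol of $k$. *)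

theory Defs
  imports "HOL-Analysis.Analysis"
begin

text \<open>A non-archimedean local field k is modelled by a field type 'k together with an
  absolute value nabs. The ring of integers o = {x. nabs x \<le> 1}.\<close>

definition ointeg :: "('k::field \<Rightarrow> real) \<Rightarrow> 'k set" where
  "ointeg nabs = {x. nabs x \<le> 1}"

text \<open>Cardinality q of the residue field o / m, m = {x. nabs x < 1}.\<close>
definition residue_card :: "('k::field \<Rightarrow> real) \<Rightarrow> nat" where
  "residue_card nabs = card ((\<lambda>x. {y \<in> ointeg nabs. nabs (x - y) < 1}) ` ointeg nabs)"

text \<open>nabs is a non-archimedean absolute value making 'k a complete discretely valued
  field with finite residue field, unramified of residue characteristic 2: the value group is
  generated by nabs 2 (so 2 is a uniformizer, e = 1), normalized by nabs 2 = 1/q.\<close>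
definition unram_2adic_local_field :: "('k::field \<Rightarrow> real) \<Rightarrow> bool" where
  "unram_2adic_local_field nabs \<longleftrightarrow>
     (\<forall>x. nabs x \<ge> 0) \<and> (\<forall>x. nabs x = 0 \<longleftrightarrow> x = 0) \<and>
     (\<forall>x y. nabs (x * y) = nabs x * nabs y) \<and>
     (\<forall>x y. nabs (x + y) \<le> max (nabs x) (nabs y)) \<and>
     (\<forall>f::nat \<Rightarrow> 'k. (\<forall>\<epsilon>>0. \<exists>N. \<forall>m\<ge>N. \<forall>n\<ge>N. nabs (f m - f n) < \<epsilon>) \<longrightarrow>
         (\<exists>L. \<forall>\<epsilon>>0. \<exists>N. \<forall>n\<ge>N. nabs (f n - L) < \<epsilon>)) \<and>
     finite ((\<lambda>x. {y \<in> ointeg nabs. nabs (x - y) < 1}) ` ointeg nabs) \<and>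
     (\<forall>x. x \<noteq> 0 \<longrightarrow> (\<exists>n::int. nabs x = nabs 2 powi n)) \<and>
     nabs 2 = 1 / real (residue_card nabs)"

definition hilbert_symbol :: "'k::field \<Rightarrow> 'k \<Rightarrow> int" where
  "hilbert_symbol a b =
     (if \<exists>x y z. (x, y, z) \<noteq> (0, 0, 0) \<and> z ^ 2 = a * x ^ 2 + b * y ^ 2 then 1 else -1)"

text \<open>Vectors of k^n are modelled as functions nat \<Rightarrow> 'k vanishing from index n on;
  the box o^n.\<close>
definition obox :: "('k::field \<Rightarrow> real) \<Rightarrow> nat \<Rightarrow> (nat \<Rightarrow> 'k) set" where
  "obox nabs n = {x. (\<forall>i<n. nabs (x i) \<le> 1) \<and> (\<forall>i\<ge>n. x i = 0)}"

definition vcong :: "('k::field \<Rightarrow> real) \<Rightarrow> nat \<Rightarrow> nat \<Rightarrow> (nat \<Rightarrow> 'k) \<Rightarrow> (nat \<Rightarrow> 'k) \<Rightarrow> bool" where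
  "vcong nabs n m x y \<longleftrightarrow> (\<forall>i<n. nabs (x i - y i) \<le> nabs 2 ^ m)"

text \<open>Haar measure (total mass 1) on o^n, given as outer content: infimum over m of
  (number of classes mod 2^m o^n meeting S) * q^(-n m). On compact open sets (finite unions of
  cosets of some 2^M o^n, in particular the sets used below) this is exactly the normalized
  additive Haar measure.\<close>
definition haar_meas :: "('k::field \<Rightarrow> real) \<Rightarrow> nat \<Rightarrow> (nat \<Rightarrow> 'k) set \<Rightarrow> real" where
  "haar_meas nabs n S =
     (INF m::nat. real (card ((\<lambda>x. {y \<in> obox nabs n. vcong nabs n m x y}) ` S))
                    / real (residue_card nabs) ^ (n * m))"

definition X_l :: "('k::field \<Rightarrow> real) \<Rightarrow> nat \<Rightarrow> ((nat \<Rightarrow> 'k) \<Rightarrow> 'k) \<Rightarrow> 'k \<Rightarrow> nat \<Rightarrow> real" where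
  "X_l nabs n B \<rho> l =
     haar_meas nabs n {x \<in> obox nabs n. nabs (B x - \<rho>) \<le> nabs 2 ^ (l + 1)}"

end

theory Submission
  imports Defs
begin



locale lf =
  fixes nabs :: "'k::field \<Rightarrow> real"
  assumes K: "unram_2adic_local_field nabs"
begin

definition p :: real where "p = nabs 2"
abbreviation q where "q \<equiv> residue_card nabs"

lemmas KK = K[unfolded unram_2adic_local_field_def]
lemma nn[simp]: "nabs x \<ge> 0" using KK[THEN conjunct1] by blast
lemma z0[simp]: "nabs x = 0 \<longleftrightarrow> x = 0" using KK[THEN conjunct2, THEN conjunct1] by blast
lemma mult: "nabs (x*y) = nabs x * nabs y" using KK[THEN conjunct2, THEN conjunct2, THEN conjunct1] by blast
lemma ultra: "nabs (x+y) \<le> max (nabs x) (nabs y)" using KK[THEN conjunct2, THEN conjunct2, THEN conjunct2, THEN conjunct1] by blast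
lemma complete: fixes f :: "nat \<Rightarrow> 'k" assumes "(\<forall>\<epsilon>>0. \<exists>N. \<forall>m\<ge>N. \<forall>n\<ge>N. nabs (f m - f n) < \<epsilon>)" shows
         "(\<exists>L. \<forall>\<epsilon>>0. \<exists>N. \<forall>n\<ge>N. nabs (f n - L) < \<epsilon>)"
proof -
  note H = KK[THEN conjunct2, THEN conjunct2, THEN conjunct2, THEN conjunct2, THEN conjunct1]
  from spec[OF H, of f] assms show ?thesis by (rule mp)
qed
lemma finres: "finite ((\<lambda>x. {y \<in> ointeg nabs. nabs (x - y) < 1}) ` ointeg nabs)"
  using KK[THEN conjunct2, THEN conjunct2, THEN conjunct2, THEN conjunct2, THEN conjunct2, THEN conjunct1] by blast
lemma disc: "x \<noteq> 0 \<Longrightarrow> \<exists>n::int. nabs x = p powi n"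
  using KK[THEN conjunct2, THEN conjunct2, THEN conjunct2, THEN conjunct2, THEN conjunct2, THEN conjunct2, THEN conjunct1] unfolding p_def by blast
lemma pq: "p = 1 / real q"
  using KK[THEN conjunct2, THEN conjunct2, THEN conjunct2, THEN conjunct2, THEN conjunct2, THEN conjunct2, THEN conjunct2] unfolding p_def by blast

lemma nabs0[simp]: "nabs 0 = 0" by simp

lemma one[simp]: "nabs 1 = 1"
proof -
  have "nabs 1 = nabs 1 * nabs 1" using mult[of 1 1] by simp
  moreover have "nabs 1 \<noteq> 0" by simp
  ultimately show ?thesis by simp
qed

lemma neg[simp]: "nabs (-x) = nabs x"
proof -
  have "nabs (-1) * nabs (-1) = 1" using mult[of "-1" "-1"] by simp
  hence "(nabs (-1))^2 = 1" by (simp add: power2_eq_square)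
  hence "nabs (-1) = 1 \<or> nabs (-1) = -1" using power2_eq_1_iff by blast
  hence "nabs (-1) = 1" using nn[of "-1"] by linarith
  thus ?thesis using mult[of "-1" x] by simp
qed

lemma commute: "nabs (x - y) = nabs (y - x)"
  by (metis minus_diff_eq neg)

lemma ultra_diff: "nabs (x-y) \<le> max (nabs x) (nabs y)"
  using ultra[of x "-y"] by simp

lemma ultra_le: "nabs x \<le> M \<Longrightarrow> nabs y \<le> M \<Longrightarrow> nabs (x+y) \<le> M"
  using ultra[of x y] by simp
lemma ultra_le_diff: "nabs x \<le> M \<Longrightarrow> nabs y \<le> M \<Longrightarrow> nabs (x-y) \<le> M"
  using ultra_diff[of x y] by simp

lemma npow[simp]: "nabs (x^n) = nabs x ^ n"
  by (induction n) (simp_all add: mult)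

lemma ndiv: "nabs (x/y) = nabs x / nabs y"
proof (cases "y = 0")
  case True thus ?thesis by simp
next
  case False
  have "nabs x = nabs (x/y) * nabs y" using mult[of "x/y" y] False by simp
  thus ?thesis using False by simp
qed

lemma nsum: "finite A \<Longrightarrow> M \<ge> 0 \<Longrightarrow> (\<And>i. i \<in> A \<Longrightarrow> nabs (f i) \<le> M) \<Longrightarrow> nabs (sum f A) \<le> M"
  by (induction A rule: finite_induct) (auto intro!: ultra_le)

lemma nmult_le: "nabs x \<le> A \<Longrightarrow> nabs y \<le> B \<Longrightarrow> nabs (x*y) \<le> A * B"
  by (simp add: mult mult_mono')

lemma ultra_eq: "nabs y < nabs x \<Longrightarrow> nabs (x + y) = nabs x"
proof -
  assume a: "nabs y < nabs x"
  have "nabs (x+y) \<le> nabs x" using ultra[of x y] a by simp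
  moreover have "nabs x \<le> max (nabs (x+y)) (nabs y)" using ultra[of "x+y" "-y"] by simp
  ultimately show ?thesis using a by auto
qed

lemma ultra_eq_diff: "nabs y < nabs x \<Longrightarrow> nabs (x - y) = nabs x"
  using ultra_eq[of "-y" x] by simp

definition rc :: "'k \<Rightarrow> 'k set" where "rc x = {y \<in> ointeg nabs. nabs (x - y) < 1}"

lemma q_def': "q = card (rc ` ointeg nabs)"
  unfolding residue_card_def rc_def by simp

lemma fin_rc: "finite (rc ` ointeg nabs)"
  using finres unfolding rc_def by simp

lemma q_ge2: "q \<ge> 2"
proof -
  have "0 \<in> ointeg nabs" "1 \<in> ointeg nabs" by (auto simp: ointeg_def)
  moreover have "rc 0 \<noteq> rc 1"
  proof
    assume "rc 0 = rc 1"
    moreover have "1 \<in> rc 1" by (simp add: rc_def ointeg_def)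
    ultimately have "1 \<in> rc 0" by simp
    thus False by (simp add: rc_def)
  qed
  ultimately have "{rc 0, rc 1} \<subseteq> rc ` ointeg nabs" by auto
  hence "card {rc 0, rc 1} \<le> q" using fin_rc q_def' card_mono by metis
  thus ?thesis using \<open>rc 0 \<noteq> rc 1\<close> by simp
qed

lemma p_pos: "p > 0" using pq q_ge2 by simp
lemma p_le: "p \<le> 1/2"
proof -
  have "real q \<ge> 2" using q_ge2 by simp
  thus ?thesis by (simp add: pq divide_le_eq)
qed
lemma p_lt1: "p < 1" using p_le by simp
lemma n2: "nabs 2 = p" by (simp add: p_def)
lemma n2pow[simp]: "nabs (2^m) = p^m" by (simp add: p_def)
lemma pq': "p * real q = 1" using pq q_ge2 by simp

lemma disc_nat: assumes "x \<noteq> 0" "nabs x \<le> 1" shows "\<exists>n::nat. nabs x = p ^ n"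
proof -
  obtain n::int where n: "nabs x = p powi n" using disc assms by blast
  have "n \<ge> 0"
  proof (rule ccontr)
    assume "\<not> n \<ge> 0"
    hence "p powi n = inverse (p ^ nat (-n))" by (simp add: power_int_def power_inverse)
    moreover have "p ^ nat (-n) < 1" using p_pos p_lt1 \<open>\<not> n \<ge> 0\<close>
      by (simp add: power_less_one_iff)
    ultimately have "p powi n > 1" using p_pos
      by (simp add: one_less_inverse)
    thus False using n assms by simp
  qed
  thus ?thesis using n by (metis nonneg_int_cases power_int_of_nat)
qed

lemma ppow_le_iff: "p^m \<le> p^n \<longleftrightarrow> n \<le> m"
  using p_pos p_lt1 by (simp add: power_decreasing_iff)
lemma ppow_lt_iff: "p^m < p^n \<longleftrightarrow> n < m"
  using p_pos p_lt1 by (simp add: power_strict_decreasing_iff)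

lemma disc_step: assumes "nabs x < p^m" shows "nabs x \<le> p^(Suc m)"
proof (cases "x = 0")
  case True thus ?thesis using p_pos by simp
next
  case False
  have "nabs x \<le> 1" using assms p_pos p_lt1
    by (meson less_eq_real_def order.trans power_le_one)
  then obtain n where n: "nabs x = p^n" using disc_nat False by blast
  have "p^n < p^m" using assms n by simp
  hence "m < n" using ppow_lt_iff by simp
  hence "p^n \<le> p^(Suc m)" using ppow_le_iff[of n "Suc m"] by simp
  thus ?thesis using n by simp
qed

lemma lt1_le_p: "nabs x < 1 \<Longrightarrow> nabs x \<le> p"
  using disc_step[of x 0] by simp

lemma unit_or: "nabs x \<le> 1 \<Longrightarrow> nabs x = 1 \<or> nabs x \<le> p"
  using lt1_le_p by force

end



context lf begin

lemma two_ne0: "(2::'k) \<noteq> 0" using p_pos n2 by (metis z0 less_irrefl)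

lemma ex_small: "\<epsilon> > 0 \<Longrightarrow> \<exists>N. p^N < \<epsilon>"
  using real_arch_pow_inv p_lt1 by blast

lemma small_all: "p^n < \<epsilon> \<Longrightarrow> m \<ge> n \<Longrightarrow> p^m < \<epsilon>"
  using ppow_le_iff[of m n] by linarith

lemma hensel:
  assumes b: "nabs b = 1" and c: "nabs c < 1"
  shows "\<exists>e. nabs e < 1 \<and> b*e + c + e^2 = 0"
proof -
  define e where "e = rec_nat 0 (\<lambda>n x. -(c + x^2)/b)"
  have e0: "e 0 = 0" and eS: "\<And>n. e (Suc n) = -(c + (e n)^2)/b" by (simp_all add: e_def)
  have b0: "b \<noteq> 0" using b by auto
  define \<gamma> where "\<gamma> = nabs c"
  have g1: "\<gamma> < 1" "\<gamma> \<ge> 0" using c by (auto simp: \<gamma>_def)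
  have gp: "\<gamma> \<le> p" using lt1_le_p c \<gamma>_def by simp
  have eb: "nabs (e n) \<le> \<gamma>" for n
  proof (induction n)
    case 0 thus ?case using g1 by (simp add: e0)
  next
    case (Suc n)
    have "nabs ((e n)^2) \<le> \<gamma> * \<gamma>" using Suc g1 by (simp add: power2_eq_square nmult_le)
    also have "\<dots> \<le> \<gamma>" using g1 by (simp add: mult_left_le_one_le)
    finally have "nabs (c + (e n)^2) \<le> \<gamma>" using ultra_le[of c \<gamma>] \<gamma>_def by simp
    moreover have "e (Suc n) = -((c + (e n)^2)/b)" by (simp add: eS minus_divide_left)
    ultimately show ?case by (simp only: neg ndiv b)
  qed
  have dS: "e (Suc (Suc n)) - e (Suc n) = - ((e (Suc n) - e n) * (e (Suc n) + e n)) / b" for n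
    using b0 by (simp add: eS field_simps power2_eq_square)
  have db: "nabs (e (Suc n) - e n) \<le> p^n" for n
  proof (induction n)
    case 0 thus ?case using eb[of 1] g1 by (simp add: e0)
  next
    case (Suc n)
    have "nabs (e (Suc n) + e n) \<le> \<gamma>" using eb ultra_le by blast
    hence "nabs ((e (Suc n) - e n) * (e (Suc n) + e n)) \<le> p^n * p"
      using Suc gp g1 by (meson nmult_le order_trans mult_left_mono zero_le_power p_pos less_imp_le)
    thus ?case using dS[of n] by (simp add: ndiv b mult.commute)
  qed
  have cau: "nabs (e m - e n) \<le> p^n" if "m \<ge> n" for m n
    using that
  proof (induction m rule: dec_induct)
    case base thus ?case using p_pos by simp
  next
    case (step m)
    have "p^m \<le> p^n" using step ppow_le_iff by simp
    hence "nabs (e (Suc m) - e m) \<le> p^n" using db[of m] by linarith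
    hence "nabs ((e (Suc m) - e m) + (e m - e n)) \<le> p^n" using step ultra_le by blast
    thus ?case by simp
  qed
  have "\<forall>\<epsilon>>0. \<exists>N. \<forall>m\<ge>N. \<forall>n\<ge>N. nabs (e m - e n) < \<epsilon>"
  proof (intro allI impI)
    fix \<epsilon> :: real assume "\<epsilon> > 0"
    then obtain N where N: "p^N < \<epsilon>" using ex_small by blast
    show "\<exists>N. \<forall>m\<ge>N. \<forall>n\<ge>N. nabs (e m - e n) < \<epsilon>"
    proof (intro exI allI impI)
      fix m n assume "m \<ge> N" "n \<ge> N"
      show "nabs (e m - e n) < \<epsilon>"
      proof (cases "m \<ge> n")
        case True thus ?thesis using cau[OF True] small_all[OF N \<open>n \<ge> N\<close>] by linarith
      next
        case False
        hence "nabs (e n - e m) \<le> p^m" using cau by simp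
        thus ?thesis using small_all[OF N \<open>m \<ge> N\<close>] commute by (metis order_le_less_trans)
      qed
    qed
  qed
  then obtain L where L: "\<forall>\<epsilon>>0. \<exists>N. \<forall>n\<ge>N. nabs (e n - L) < \<epsilon>" using complete by blast
  define F where "F x = b*x + c + x^2" for x
  have Fe: "F (e n) = b * (e n - e (Suc n))" for n
    using b0 by (simp add: F_def eS field_simps)
  have key: "nabs (F L) < \<epsilon> \<and> nabs L < 1" if eps: "\<epsilon> > 0" "\<epsilon> \<le> 1" for \<epsilon>
  proof -
    obtain N1 where N1: "p^N1 < \<epsilon>" using ex_small[OF eps(1)] by blast
    obtain N2 where N2: "\<forall>n\<ge>N2. nabs (e n - L) < \<epsilon>" using L eps(1) by blast
    define n where "n = max N1 N2"
    have a1: "nabs (e n - L) < \<epsilon>" using N2 n_def by simp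
    have a2: "p^n < \<epsilon>" using small_all[OF N1] n_def by simp
    have "nabs L \<le> max (nabs (e n)) (nabs (e n - L))" using ultra_diff[of "e n" "e n - L"] by simp
    hence Ll: "nabs L < 1" using eb[of n] g1 a1 eps by auto
    have "F L = F (e n) + (L - e n) * (b + L + e n)" by (simp add: F_def algebra_simps power2_eq_square)
    moreover have "nabs (F (e n)) < \<epsilon>" using Fe[of n] db[of n] a2 b by (simp add: mult commute)
    moreover have "nabs ((L - e n) * (b + L + e n)) < \<epsilon>"
    proof -
      have "nabs (b + L + e n) \<le> 1" using b Ll eb[of n] g1 by (intro ultra_le) auto
      moreover have "nabs (L - e n) < \<epsilon>" using a1 commute by simp
      ultimately have "nabs (L - e n) * nabs (b + L + e n) < \<epsilon>"
        using mult_left_le[of "nabs (b + L + e n)" "nabs (L - e n)"] by simp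
      thus ?thesis by (simp add: mult)
    qed
    ultimately have "nabs (F L) < \<epsilon>" using ultra[of "F (e n)" "(L - e n) * (b + L + e n)"] by simp
    thus ?thesis using Ll by simp
  qed
  have "F L = 0"
  proof (rule ccontr)
    assume "F L \<noteq> 0"
    hence "nabs (F L) > 0" using nn[of "F L"] z0 by (metis less_eq_real_def)
    thus False using key[of "min (nabs (F L)) 1"] by simp
  qed
  thus ?thesis using key[of 1] F_def by auto
qed

end

locale lfu = lf nabs for nabs :: "'k::field \<Rightarrow> real" +
  fixes u :: 'k
  assumes u: "nabs u = 1"
    and hil: "hilbert_symbol (1 + 2*u) (-1) = -1"
begin

definition a :: 'k where "a = 1 + 2*u"

lemma no_root: assumes "nabs r \<le> 1" shows "nabs (r^2 + r - u) = 1"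
proof (rule ccontr)
  assume ne: "nabs (r^2 + r - u) \<noteq> 1"
  have "nabs (r^2 + r - u) \<le> 1" using assms u
    by (intro ultra_le_diff ultra_le) (auto simp: power_le_one)
  hence c: "nabs (r^2 + r - u) < 1" using ne by simp
  have "nabs (2*r) \<le> p" using assms p_pos by (simp add: mult n2 mult_left_le)
  hence "nabs (1 + 2*r) = 1" using ultra_eq[of "2*r" 1] p_lt1 by simp
  then obtain e where e: "(1+2*r)*e + (r^2+r-u) + e^2 = 0" using hensel c by blast
  define y where "y = r + e"
  have yy: "y^2 + y = u" using e unfolding y_def by (simp add: algebra_simps power2_eq_square)
  define X where "X = 1 + 2*y"
  have "(X+1)^2 = (1+2*u) * 2^2 + (-1) * (X-1)^2"
    unfolding X_def using yy[symmetric] by (simp add: algebra_simps power2_eq_square)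
  hence "hilbert_symbol (1 + 2*u) (-1) = 1" unfolding hilbert_symbol_def using two_ne0
    by (metis (no_types, lifting) prod.inject)
  thus False using hil by simp
qed

end



context lf begin

lemma o_of_nat: "nabs (of_nat n :: 'k) \<le> 1"
  by (induction n) (auto intro: ultra_le)
lemma o_numeral: "nabs (numeral n :: 'k) \<le> 1"
  using o_of_nat[of "numeral n"] by simp
lemma oI: "nabs x \<le> 1 \<Longrightarrow> nabs y \<le> 1 \<Longrightarrow> nabs (x*y) \<le> 1"
  "nabs x \<le> 1 \<Longrightarrow> nabs y \<le> 1 \<Longrightarrow> nabs (x+y) \<le> 1"
  "nabs x \<le> 1 \<Longrightarrow> nabs y \<le> 1 \<Longrightarrow> nabs (x-y) \<le> 1"
  "nabs x \<le> 1 \<Longrightarrow> nabs (-x) \<le> 1"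
  "nabs x \<le> 1 \<Longrightarrow> nabs (x^n) \<le> 1"
  "nabs (1::'k) \<le> 1" "nabs (0::'k) \<le> 1" "nabs (numeral m :: 'k) \<le> 1"
  using nmult_le[of x 1 y 1] ultra_le ultra_le_diff o_numeral
  by (auto simp: power_le_one)

lemma two_mult_le: "nabs x \<le> 1 \<Longrightarrow> nabs (2*x) \<le> p"
  using nmult_le[of 2 p x 1] n2 by simp
lemma div2: "nabs x \<le> p \<Longrightarrow> nabs (x/2) \<le> 1"
  using p_pos by (simp add: ndiv n2)
lemma div2': "nabs x \<le> p * c \<Longrightarrow> nabs (x/2) \<le> c"
  using p_pos by (simp add: ndiv n2 divide_le_eq mult.commute)
lemma small_mult: "nabs x \<le> A \<Longrightarrow> nabs y \<le> 1 \<Longrightarrow> nabs (x*y) \<le> A"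
  using nmult_le[of x A y 1] by simp
lemma n4: "nabs (4::'k) = p^2"
  using n2pow[of 2] by simp
lemma four_ne0: "(4::'k) \<noteq> 0" using n4 p_pos by (metis z0 power_not_zero less_irrefl)
lemma sq_small: "nabs x \<le> 1 \<Longrightarrow> nabs (x^2) \<le> p \<Longrightarrow> nabs x \<le> p"
proof -
  assume a: "nabs x \<le> 1" "nabs (x^2) \<le> p"
  have "nabs x \<noteq> 1" using a(2) p_lt1 by auto
  thus ?thesis using unit_or a(1) by blast
qed

end

lemma ring_id1:
  fixes x0 x1 x2 t u :: "'a::comm_ring_1"
  defines "x3 \<equiv> 2*t - x0 - x1 - x2"
  shows "x0*x1+x0*x2+x0*x3+x1*x2+x1*x3+x2*x3 + (1+u)*(x2^2+x3^2)
    = u*(x0-x2)^2 + (x0-x2)*(x1-x2) + u*(x1-x2)^2 + 2*(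
      u*x0*x1 + 2*u*x0*x2 + 2*u*x1*x2 + x0*x2 + x1*x2 + 2*t^2 + 2*t^2*u - 2*t*u*x0 - 2*t*u*x1 - 2*t*u*x2 - t*x0 - t*x1 - t*x2)"
  unfolding x3_def by (simp add: algebra_simps power2_eq_square)

lemma ring_id2:
  fixes x0 d1 d2 d3 u :: "'a::comm_ring_1"
  shows "x0^2 + (x0+2*d1)^2 - (1+2*u)*((x0+2*d2)^2 + (x0+2*d3)^2)
    = 4*(((d1+d2+d3)^2 + (d1+d2+d3)*x0 - u*x0^2) + 2*(0
      -d1*d2 - d1*d3 - d2*d3 - d2*u*x0 - d2*x0 - d2^2 - d2^2*u - d3*u*x0 - d3*x0 - d3^2 - d3^2*u))"
  by (simp add: algebra_simps power2_eq_square)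

context lfu begin

definition Bf :: "(nat \<Rightarrow> 'k) \<Rightarrow> 'k" where
  "Bf x = x 0^2 + x 1^2 - a*(x 2^2 + x 3^2)"

lemma u0: "u \<noteq> 0" using u by auto

lemma bin_unit: assumes R: "nabs R = 1" and P: "nabs P \<le> 1"
  shows "nabs (u*P^2 + P*R + u*R^2) = 1"
proof -
  have R0: "R \<noteq> 0" using R by auto
  define y where "y = u*P/R"
  have y1: "nabs y \<le> 1" using P u R by (simp add: y_def ndiv mult)
  have id: "u*P^2 + P*R + u*R^2 = (R^2/u) * (y^2+y+u^2)"
    using R0 u0 by (simp add: y_def field_simps power2_eq_square)
  have id2: "(y+u)^2 + (y+u) - u = (y^2+y+u^2) + 2*(y*u)"
    by (simp add: algebra_simps power2_eq_square)
  have "nabs ((y+u)^2 + (y+u) - u) = 1" using no_root[of "y+u"] y1 u by (simp add: ultra_le)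
  moreover have "nabs (2*(y*u)) \<le> p" using y1 u by (intro two_mult_le) (simp add: mult)
  moreover have A1: "nabs (y^2+y+u^2) \<le> 1" using y1 u by (intro oI) auto
  ultimately have "nabs (y^2+y+u^2) = 1"
  proof -
    assume h1: "nabs ((y+u)^2 + (y+u) - u) = 1" and h2: "nabs (2*(y*u)) \<le> p"
    have "\<not> nabs (y^2+y+u^2) \<le> p"
    proof
      assume "nabs (y^2+y+u^2) \<le> p"
      hence "nabs ((y^2+y+u^2) + 2*(y*u)) \<le> p" using h2 ultra_le by blast
      thus False using h1 id2 p_lt1 by simp
    qed
    thus ?thesis using unit_or A1 by blast
  qed
  thus ?thesis using id R u by (simp add: mult ndiv)
qed

lemma bin_aniso: assumes "nabs P \<le> 1" "nabs R \<le> 1" "nabs (u*P^2 + P*R + u*R^2) \<le> p"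
  shows "nabs P \<le> p \<and> nabs R \<le> p"
proof -
  have "nabs R \<noteq> 1" using bin_unit[of R P] assms p_lt1 by auto
  moreover have "nabs P \<noteq> 1" using bin_unit[of P R] assms p_lt1 by (auto simp: algebra_simps)
  ultimately show ?thesis using unit_or assms by blast
qed


lemma Bf_int: "\<forall>i<4. nabs (x i) \<le> 1 \<Longrightarrow> nabs (Bf x) \<le> 1"
  unfolding Bf_def a_def using u by (intro oI) auto

lemma Bf_S: "Bf x = (x 0 + x 1 + x 2 + x 3)^2 - 2*((x 0*x 1+x 0*x 2+x 0*x 3+x 1*x 2+x 1*x 3+x 2*x 3) + (1+u)*(x 2^2+x 3^2))"
  unfolding Bf_def a_def by (simp add: algebra_simps power2_eq_square)

lemma S_small: assumes o: "\<forall>i<4. nabs (x i) \<le> 1"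
  shows "nabs (Bf x) \<le> p \<longleftrightarrow> nabs (x 0 + x 1 + x 2 + x 3) \<le> p"
proof -
  define G where "G = (x 0*x 1+x 0*x 2+x 0*x 3+x 1*x 2+x 1*x 3+x 2*x 3) + (1+u)*(x 2^2+x 3^2)"
  define S where "S = x 0 + x 1 + x 2 + x 3"
  have G1: "nabs G \<le> 1" unfolding G_def using o u by (intro oI) auto
  have S1: "nabs S \<le> 1" unfolding S_def using o by (intro oI) auto
  have e: "Bf x = S^2 - 2*G" using Bf_S unfolding S_def G_def by simp
  have g: "nabs (2*G) \<le> p" using two_mult_le G1 by blast
  show ?thesis
  proof
    assume "nabs (Bf x) \<le> p"
    hence "nabs (Bf x + 2*G) \<le> p" using g ultra_le by blast
    hence "nabs (S^2) \<le> p" using e by simp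
    thus "nabs (x 0 + x 1 + x 2 + x 3) \<le> p" using sq_small S1 S_def by blast
  next
    assume "nabs (x 0 + x 1 + x 2 + x 3) \<le> p"
    hence "nabs (S*S) \<le> p" using S1 S_def small_mult by blast
    hence "nabs (S^2) \<le> p" by (simp add: power2_eq_square)
    thus "nabs (Bf x) \<le> p" using e g ultra_le_diff by simp
  qed
qed

lemma aniso: assumes o: "\<forall>i<4. nabs (x i) \<le> 1" and b: "nabs (Bf x) \<le> p^2"
  shows "(\<forall>i<4. nabs (x i) \<le> p) \<or> (nabs (x 0) = 1 \<and> (\<forall>i<4. nabs (x i - x 0) \<le> p))"
proof -
  define G where "G = (x 0*x 1+x 0*x 2+x 0*x 3+x 1*x 2+x 1*x 3+x 2*x 3) + (1+u)*(x 2^2+x 3^2)"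
  define S where "S = x 0 + x 1 + x 2 + x 3"
  have G1: "nabs G \<le> 1" unfolding G_def using o u by (intro oI) auto
  have e: "Bf x = S^2 - 2*G" using Bf_S unfolding S_def G_def by simp
  have pp: "p^2 \<le> p" using p_pos p_lt1 by (simp add: power2_eq_square mult_left_le_one_le)
  have "nabs S \<le> p" using S_small[OF o] b pp S_def by simp
  define t where "t = S/2"
  have t1: "nabs t \<le> 1" unfolding t_def by (rule div2) fact
  have x3: "x 3 = 2*t - x 0 - x 1 - x 2" using two_ne0 unfolding t_def S_def by (simp add: field_simps)
  have "nabs (4*t^2) \<le> p^2" using t1 small_mult[of 4 "p^2" "t^2"] n4 by (simp add: power_le_one)
  hence "nabs (2*G) \<le> p^2"
  proof -
    assume h: "nabs (4*t^2) \<le> p^2"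
    have "2*G = 4*t^2 - Bf x" using e two_ne0 four_ne0 by (simp add: t_def power2_eq_square field_simps)
    thus ?thesis using h b ultra_le_diff by simp
  qed
  hence Gp: "nabs G \<le> p" using p_pos by (simp add: mult n2 power2_eq_square)
  have GW: "G = u*(x 0-x 2)^2 + (x 0-x 2)*(x 1-x 2) + u*(x 1-x 2)^2 + 2*(
      u*x 0*x 1 + 2*u*x 0*x 2 + 2*u*x 1*x 2 + x 0*x 2 + x 1*x 2 + 2*t^2 + 2*t^2*u - 2*t*u*x 0 - 2*t*u*x 1 - 2*t*u*x 2 - t*x 0 - t*x 1 - t*x 2)"
    unfolding G_def x3 by (rule ring_id1)
  have W: "nabs (2*(u*x 0*x 1 + 2*u*x 0*x 2 + 2*u*x 1*x 2 + x 0*x 2 + x 1*x 2 + 2*t^2 + 2*t^2*u - 2*t*u*x 0 - 2*t*u*x 1 - 2*t*u*x 2 - t*x 0 - t*x 1 - t*x 2)) \<le> p"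
    using o t1 u by (intro two_mult_le oI) auto
  have "nabs (u*(x 0-x 2)^2 + (x 0-x 2)*(x 1-x 2) + u*(x 1-x 2)^2) \<le> p"
    using Gp W GW ultra_le_diff by (metis add_diff_cancel_right')
  hence PR: "nabs (x 0 - x 2) \<le> p \<and> nabs (x 1 - x 2) \<le> p"
    using o by (intro bin_aniso) (auto intro: oI)
  have "x 3 - x 2 = 2*t - (x 0 - x 2) - (x 1 - x 2) - 2*(2*x 2)" using x3 by (simp add: algebra_simps)
  moreover have "nabs (2*t) \<le> p" using t1 by (rule two_mult_le)
  moreover have "nabs (2*(2*x 2)) \<le> p" using o by (intro two_mult_le oI) auto
  ultimately have P3: "nabs (x 3 - x 2) \<le> p" using PR by (metis ultra_le_diff)
  have c0: "nabs (x 0 - x 0) \<le> p" using p_pos by simp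
  have c2: "nabs (x 2 - x 0) \<le> p" using PR commute by simp
  have c1: "nabs (x 1 - x 0) \<le> p" using PR commute ultra_le_diff[of "x 1 - x 2" p "x 0 - x 2"] by simp
  have c3: "nabs (x 3 - x 0) \<le> p" using PR P3 ultra_le_diff[of "x 3 - x 2" p "x 0 - x 2"] by simp
  have all: "\<forall>i<4. nabs (x i - x 0) \<le> p"
  proof (intro allI impI)
    fix i :: nat assume "i < 4"
    hence "i = 0 \<or> i = 1 \<or> i = 2 \<or> i = 3" by auto
    thus "nabs (x i - x 0) \<le> p" using c0 c1 c2 c3 by auto
  qed
  show ?thesis
  proof (cases "nabs (x 0) = 1")
    case True thus ?thesis using all by simp
  next
    case False
    have "nabs (x 0) \<le> 1" using o by simp
    hence x0: "nabs (x 0) \<le> p" using unit_or False by blast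
    have "\<forall>i<4. nabs (x i) \<le> p"
    proof (intro allI impI)
      fix i :: nat assume "i < 4"
      hence "nabs ((x i - x 0) + x 0) \<le> p" using all x0 ultra_le by blast
      thus "nabs (x i) \<le> p" by simp
    qed
    thus ?thesis by simp
  qed
qed

lemma aniso2: assumes x0: "nabs (x 0) = 1" and c: "\<forall>i<4. nabs (x i - x 0) \<le> p"
  shows "nabs (Bf x) = p^2"
proof -
  define d1 where "d1 = (x 1 - x 0)/2"
  define d2 where "d2 = (x 2 - x 0)/2"
  define d3 where "d3 = (x 3 - x 0)/2"
  have d: "nabs d1 \<le> 1" "nabs d2 \<le> 1" "nabs d3 \<le> 1"
    unfolding d1_def d2_def d3_def using c by (auto intro!: div2)
  have xe: "x 1 = x 0 + 2*d1" "x 2 = x 0 + 2*d2" "x 3 = x 0 + 2*d3"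
    using two_ne0 by (simp_all add: d1_def d2_def d3_def field_simps)
  define D where "D = d1+d2+d3"
  define W where "W = (0 - d1*d2 - d1*d3 - d2*d3 - d2*u*x 0 - d2*x 0 - d2^2 - d2^2*u - d3*u*x 0 - d3*x 0 - d3^2 - d3^2*u)"
  have e: "Bf x = 4*((D^2 + D*x 0 - u*x 0^2) + 2*W)"
    unfolding Bf_def a_def xe D_def W_def by (rule ring_id2)
  have x00: "x 0 \<noteq> 0" using x0 by auto
  have D1: "nabs D \<le> 1" unfolding D_def using d by (intro oI) auto
  have "D^2 + D*x 0 - u*x 0^2 = x 0^2 * ((D/x 0)^2 + D/x 0 - u)"
    using x00 by (simp add: field_simps power2_eq_square)
  moreover have "nabs ((D/x 0)^2 + D/x 0 - u) = 1" using no_root[of "D/x 0"] D1 x0 by (simp add: ndiv)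
  ultimately have m1: "nabs (D^2 + D*x 0 - u*x 0^2) = 1" using x0 by (simp add: mult)
  have "nabs (2*W) \<le> p" unfolding W_def using d x0 u by (intro two_mult_le oI) auto
  hence h: "nabs ((D^2 + D*x 0 - u*x 0^2) + 2*W) = 1" using m1 p_lt1 ultra_eq by simp
  show ?thesis unfolding e mult n4 h by simp
qed
end



lemma card_image_eqrel:
  assumes "\<And>a b. a \<in> A \<Longrightarrow> b \<in> A \<Longrightarrow> f a = f b \<longleftrightarrow> h a = h b"
  shows "card (f ` A) = card (h ` A) \<and> (finite (f ` A) \<longleftrightarrow> finite (h ` A))"
proof -
  define g where "g c = f (SOME a. a \<in> A \<and> h a = c)" for c
  have gh: "g (h a) = f a" if "a \<in> A" for a
  proof -
    have "\<exists>a'. a' \<in> A \<and> h a' = h a" using that by blast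
    hence "(SOME a'. a' \<in> A \<and> h a' = h a) \<in> A \<and> h (SOME a'. a' \<in> A \<and> h a' = h a) = h a"
      by (rule someI_ex)
    thus ?thesis unfolding g_def using assms that by blast
  qed
  have im: "f ` A = g ` (h ` A)" using gh by (auto simp: image_iff)
  have inj: "inj_on g (h ` A)"
  proof (rule inj_onI)
    fix x y assume "x \<in> h ` A" "y \<in> h ` A" "g x = g y"
    then obtain a b where "a \<in> A" "b \<in> A" "x = h a" "y = h b" by blast
    thus "x = y" using \<open>g x = g y\<close> gh assms by auto
  qed
  show ?thesis using im inj card_image finite_image_iff by metis
qed

lemma fiber_count:
  assumes B: "finite B" and fA: "f ` A \<subseteq> B"
    and fin: "\<And>b. b \<in> B \<Longrightarrow> finite {a\<in>A. f a = b}"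
    and k: "\<And>b. b \<in> B \<Longrightarrow> card {a\<in>A. f a = b} = k"
  shows "card A = k * card B \<and> finite A"
proof -
  have A: "A = (\<Union>b\<in>B. {a\<in>A. f a = b})" using fA by auto
  have "card (\<Union>b\<in>B. {a\<in>A. f a = b}) = (\<Sum>b\<in>B. card {a\<in>A. f a = b})"
    by (rule card_UN_disjoint) (use B fin in auto)
  also have "\<dots> = k * card B" using k by simp
  finally have c: "card A = k * card B" using A by simp
  have "finite A" by (subst A) (rule finite_UN_I[OF B fin])
  thus ?thesis using c by simp
qed

lemma fiber_count_le:
  assumes B: "finite B" and fA: "f ` A \<subseteq> B"
    and fin: "\<And>b. b \<in> B \<Longrightarrow> finite {a\<in>A. f a = b}"
    and k: "\<And>b. b \<in> B \<Longrightarrow> card {a\<in>A. f a = b} \<le> k"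
  shows "card A \<le> k * card B \<and> finite A"
proof -
  have A: "A = (\<Union>b\<in>B. {a\<in>A. f a = b})" using fA by auto
  have "card (\<Union>b\<in>B. {a\<in>A. f a = b}) = (\<Sum>b\<in>B. card {a\<in>A. f a = b})"
    by (rule card_UN_disjoint) (use B fin in auto)
  also have "\<dots> \<le> k * card B" using k sum_bounded_above[of B "\<lambda>b. card {a\<in>A. f a = b}" k] by (simp add: mult.commute)
  finally have c: "card A \<le> k * card B" using A by simp
  have "finite A" by (subst A) (rule finite_UN_I[OF B fin])
  thus ?thesis using c by simp
qed

context lf begin

definition cl :: "nat \<Rightarrow> nat \<Rightarrow> (nat \<Rightarrow> 'k) \<Rightarrow> (nat \<Rightarrow> 'k) set" where
  "cl n m x = {y \<in> obox nabs n. vcong nabs n m x y}"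
definition cnt :: "nat \<Rightarrow> nat \<Rightarrow> (nat \<Rightarrow> 'k) set \<Rightarrow> nat" where
  "cnt n m S = card (cl n m ` S)"
definition per :: "nat \<Rightarrow> nat \<Rightarrow> (nat \<Rightarrow> 'k) set \<Rightarrow> bool" where
  "per n m S \<longleftrightarrow> S \<subseteq> obox nabs n \<and> (\<forall>x\<in>S. \<forall>y\<in>obox nabs n. vcong nabs n m x y \<longrightarrow> y \<in> S)"

lemma vc: "vcong nabs n m x y \<longleftrightarrow> (\<forall>i<n. nabs (x i - y i) \<le> p^m)"
  by (simp add: vcong_def p_def)
lemma ob_iff: "x \<in> obox nabs n \<longleftrightarrow> (\<forall>i<n. nabs (x i) \<le> 1) \<and> (\<forall>i\<ge>n. x i = 0)"
  by (simp add: obox_def)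
lemma vc_refl: "vcong nabs n m x x" using p_pos by (simp add: vc)
lemma vc_sym: "vcong nabs n m x y \<Longrightarrow> vcong nabs n m y x" by (simp add: vc commute)
lemma vc_trans: "vcong nabs n m x y \<Longrightarrow> vcong nabs n m y z \<Longrightarrow> vcong nabs n m x z"
  unfolding vc
proof (intro allI impI)
  fix i assume "\<forall>i<n. nabs (x i - y i) \<le> p ^ m" "\<forall>i<n. nabs (y i - z i) \<le> p ^ m" "i < n"
  hence "nabs ((x i - y i) + (y i - z i)) \<le> p^m" by (intro ultra_le) auto
  thus "nabs (x i - z i) \<le> p^m" by simp
qed
lemma vc_mono': "k \<le> m \<Longrightarrow> vcong nabs n m x y \<Longrightarrow> vcong nabs n k x y"
  unfolding vc using ppow_le_iff[of m k] by (meson order_trans)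
lemma vc_mono: "vcong nabs n (Suc m) x y \<Longrightarrow> vcong nabs n m x y"
  using vc_mono'[of m "Suc m"] by simp
lemma vc0: "x \<in> obox nabs n \<Longrightarrow> y \<in> obox nabs n \<Longrightarrow> vcong nabs n 0 x y"
  unfolding vc ob_iff by (auto intro: ultra_le_diff)

lemma cl_mem: "x \<in> obox nabs n \<Longrightarrow> x \<in> cl n m x"
  by (simp add: cl_def vc_refl)
lemma cl_eq: assumes "x \<in> obox nabs n" "y \<in> obox nabs n"
  shows "cl n m x = cl n m y \<longleftrightarrow> vcong nabs n m x y"
proof
  assume "cl n m x = cl n m y"
  hence "y \<in> cl n m x" using cl_mem assms by metis
  thus "vcong nabs n m x y" by (simp add: cl_def)
next
  assume h: "vcong nabs n m x y"
  show "cl n m x = cl n m y"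
    unfolding cl_def using h vc_sym vc_trans by blast
qed

lemma per_sub: "per n m S \<Longrightarrow> S \<subseteq> obox nabs n" by (simp add: per_def)

lemma rc_eq: assumes "nabs x \<le> 1" "nabs y \<le> 1"
  shows "rc x = rc y \<longleftrightarrow> nabs (x - y) \<le> p"
proof
  assume h: "rc x = rc y"
  have "y \<in> rc y" using assms by (simp add: rc_def ointeg_def)
  hence "y \<in> rc x" using h by simp
  hence "nabs (x - y) < 1" by (simp add: rc_def)
  thus "nabs (x - y) \<le> p" by (rule lt1_le_p)
next
  assume h: "nabs (x - y) \<le> p"
  show "rc x = rc y"
  proof (rule set_eqI)
    fix z
    have "nabs (x - z) < 1 \<longleftrightarrow> nabs (y - z) < 1"
    proof
      assume "nabs (x - z) < 1"
      moreover have "nabs (y - z) \<le> max (nabs (y - x)) (nabs (x - z))"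
        using ultra[of "y - x" "x - z"] by simp
      ultimately show "nabs (y - z) < 1" using h commute p_lt1 by auto
    next
      assume "nabs (y - z) < 1"
      moreover have "nabs (x - z) \<le> max (nabs (x - y)) (nabs (y - z))"
        using ultra[of "x - y" "y - z"] by simp
      ultimately show "nabs (x - z) < 1" using h p_lt1 by auto
    qed
    thus "z \<in> rc x \<longleftrightarrow> z \<in> rc y" by (simp add: rc_def)
  qed
qed

lemma cnt1_prod:
  assumes Ao: "\<And>i y. i < n \<Longrightarrow> y \<in> A i \<Longrightarrow> nabs y \<le> 1"
  shows "card (cl n 1 ` {x\<in>obox nabs n. \<forall>i<n. x i \<in> A i}) = (\<Prod>i<n. card (rc ` A i))
     \<and> finite (cl n 1 ` {x\<in>obox nabs n. \<forall>i<n. x i \<in> A i})"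
proof -
  define S where "S = {x\<in>obox nabs n. \<forall>i<n. x i \<in> A i}"
  define R where "R x = restrict (\<lambda>i. rc (x i)) {..<n}" for x
  have eq: "cl n 1 x = cl n 1 y \<longleftrightarrow> R x = R y" if "x \<in> S" "y \<in> S" for x y
  proof -
    have xo: "x \<in> obox nabs n" "y \<in> obox nabs n" using that S_def by auto
    have "cl n 1 x = cl n 1 y \<longleftrightarrow> (\<forall>i<n. nabs (x i - y i) \<le> p)"
      using cl_eq[OF xo] by (simp add: vc)
    also have "\<dots> \<longleftrightarrow> (\<forall>i<n. rc (x i) = rc (y i))"
      using rc_eq xo by (auto simp: ob_iff)
    also have "\<dots> \<longleftrightarrow> R x = R y"
      unfolding R_def restrict_def by (auto simp: fun_eq_iff)
    finally show ?thesis .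
  qed
  have RS: "R ` S = PiE {..<n} (\<lambda>i. rc ` A i)"
  proof
    show "R ` S \<subseteq> PiE {..<n} (\<lambda>i. rc ` A i)" unfolding R_def S_def by auto
  next
    show "PiE {..<n} (\<lambda>i. rc ` A i) \<subseteq> R ` S"
    proof
      fix f assume f: "f \<in> PiE {..<n} (\<lambda>i. rc ` A i)"
      define x where "x i = (if i < n then (SOME a. a \<in> A i \<and> rc a = f i) else 0)" for i
      have xi: "x i \<in> A i \<and> rc (x i) = f i" if "i < n" for i
      proof -
        have "f i \<in> rc ` A i" using f that by auto
        hence "\<exists>a. a \<in> A i \<and> rc a = f i" by (metis imageE)
        hence "(SOME a. a \<in> A i \<and> rc a = f i) \<in> A i \<and> rc (SOME a. a \<in> A i \<and> rc a = f i) = f i"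
          by (rule someI_ex)
        thus ?thesis using that by (simp add: x_def)
      qed
      have "x \<in> S" unfolding S_def ob_iff using xi Ao by (auto simp: x_def)
      moreover have "R x = f"
      proof (rule ext)
        fix i show "R x i = f i"
          using xi f by (cases "i < n") (auto simp: R_def PiE_def extensional_def)
      qed
      ultimately show "f \<in> R ` S" by blast
    qed
  qed
  have "card (cl n 1 ` S) = card (R ` S) \<and> (finite (cl n 1 ` S) \<longleftrightarrow> finite (R ` S))"
    by (rule card_image_eqrel) (rule eq)
  moreover have "finite (R ` S)" unfolding RS
  proof (rule finite_PiE)
    fix i assume "i \<in> {..<n}"
    have "rc ` A i \<subseteq> rc ` ointeg nabs" using Ao \<open>i \<in> {..<n}\<close> by (auto simp: ointeg_def)
    thus "finite (rc ` A i)" using fin_rc finite_subset by blast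
  qed simp
  ultimately show ?thesis unfolding S_def[symmetric] RS by (simp add: card_PiE)
qed

lemma cnt1_ob: "card (cl n 1 ` obox nabs n) = q^n \<and> finite (cl n 1 ` obox nabs n)"
proof -
  have "obox nabs n = {x\<in>obox nabs n. \<forall>i<n. x i \<in> ointeg nabs}" by (auto simp: ob_iff ointeg_def)
  moreover have "(\<Prod>i<n. card (rc ` ointeg nabs)) = q^n" by (simp add: q_def')
  ultimately show ?thesis using cnt1_prod[of n "\<lambda>_. ointeg nabs"] by (simp add: ointeg_def)
qed

lemma split: assumes x: "x \<in> obox nabs n"
  shows "card (cl n (Suc m) ` cl n m x) = q^n \<and> finite (cl n (Suc m) ` cl n m x)"
proof -
  define g where "g d = cl n (Suc m) (\<lambda>i. x i + 2^m * d i)" for d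
  have 2: "(2::'k)^m \<noteq> 0" using two_ne0 by simp
  have img: "cl n (Suc m) ` cl n m x = g ` obox nabs n"
  proof
    show "cl n (Suc m) ` cl n m x \<subseteq> g ` obox nabs n"
    proof
      fix X assume "X \<in> cl n (Suc m) ` cl n m x"
      then obtain y where y: "y \<in> cl n m x" "X = cl n (Suc m) y" by blast
      define d where "d i = (y i - x i) / 2^m" for i
      have yo: "y \<in> obox nabs n" "vcong nabs n m x y" using y by (auto simp: cl_def)
      have "d \<in> obox nabs n" unfolding ob_iff
      proof (intro conjI allI impI)
        fix i assume "i < n"
        hence "nabs (y i - x i) \<le> p^m" using yo(2) commute by (simp add: vc)
        thus "nabs (d i) \<le> 1" using p_pos by (simp add: d_def ndiv n2 divide_le_eq)
      next
        fix i assume "n \<le> i" thus "d i = 0" using x yo by (simp add: d_def ob_iff)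
      qed
      moreover have "(\<lambda>i. x i + 2^m * d i) = y" using 2 by (simp add: d_def)
      ultimately show "X \<in> g ` obox nabs n" using y g_def by auto
    qed
  next
    show "g ` obox nabs n \<subseteq> cl n (Suc m) ` cl n m x"
    proof
      fix X assume "X \<in> g ` obox nabs n"
      then obtain d where d: "d \<in> obox nabs n" "X = g d" by blast
      have "(\<lambda>i. x i + 2^m * d i) \<in> cl n m x" unfolding cl_def vc ob_iff
        using x d p_pos by (auto simp: ob_iff mult n2 intro!: ultra_le oI mult_left_le)
      thus "X \<in> cl n (Suc m) ` cl n m x" using d g_def by auto
    qed
  qed
  have eq: "g d = g d' \<longleftrightarrow> cl n 1 d = cl n 1 d'" if "d \<in> obox nabs n" "d' \<in> obox nabs n" for d d'
  proof -
    have o1: "(\<lambda>i. x i + 2^m * d i) \<in> obox nabs n" "(\<lambda>i. x i + 2^m * d' i) \<in> obox nabs n"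
      using x that p_pos by (auto simp: ob_iff mult n2 intro!: ultra_le oI mult_left_le)
    have "g d = g d' \<longleftrightarrow> (\<forall>i<n. nabs (2^m * (d i - d' i)) \<le> p^(Suc m))"
      unfolding g_def cl_eq[OF o1] vc by (simp add: algebra_simps)
    also have "\<dots> \<longleftrightarrow> (\<forall>i<n. nabs (d i - d' i) \<le> p)"
      using p_pos by (simp add: mult n2 mult.commute[of p])
    also have "\<dots> \<longleftrightarrow> cl n 1 d = cl n 1 d'"
      using cl_eq[OF that] by (simp add: vc)
    finally show ?thesis .
  qed
  have "card (g ` obox nabs n) = card (cl n 1 ` obox nabs n) \<and>
      (finite (g ` obox nabs n) \<longleftrightarrow> finite (cl n 1 ` obox nabs n))"
    by (rule card_image_eqrel) (rule eq)
  thus ?thesis using cnt1_ob img by simp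
qed

end



context lf begin

definition co :: "nat \<Rightarrow> nat \<Rightarrow> (nat \<Rightarrow> 'k) set \<Rightarrow> (nat \<Rightarrow> 'k) set" where
  "co n m X = {z \<in> obox nabs n. \<exists>w\<in>X. vcong nabs n m w z}"

lemma co_cl: assumes "y \<in> obox nabs n" shows "co n m (cl n (Suc m) y) = cl n m y"
  unfolding co_def cl_def using assms vc_refl vc_mono vc_trans vc_sym by blast

lemma cnt_step:
  assumes S: "S \<subseteq> obox nabs n" and fin: "finite (cl n m ` S)"
  shows "card (cl n (Suc m) ` S) \<le> q^n * card (cl n m ` S) \<and> finite (cl n (Suc m) ` S)"
    and "per n m S \<Longrightarrow> card (cl n (Suc m) ` S) = q^n * card (cl n m ` S)"
proof -
  have fib: "{X \<in> cl n (Suc m) ` S. co n m X = cl n m x} = cl n (Suc m) ` {y\<in>S. y \<in> cl n m x}"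
    if "x \<in> S" for x
  proof -
    have "co n m (cl n (Suc m) y) = cl n m x \<longleftrightarrow> y \<in> cl n m x" if "y \<in> S" for y
    proof -
      have yo: "y \<in> obox nabs n" "x \<in> obox nabs n" using S that \<open>x \<in> S\<close> by auto
      show ?thesis using co_cl[OF yo(1)] cl_eq[OF yo(2) yo(1)] yo by (auto simp: cl_def)
    qed
    thus ?thesis by auto
  qed
  have sub: "cl n (Suc m) ` {y\<in>S. y \<in> cl n m x} \<subseteq> cl n (Suc m) ` cl n m x" for x by auto
  have mapsto: "co n m ` (cl n (Suc m) ` S) \<subseteq> cl n m ` S" using co_cl S by auto
  show "card (cl n (Suc m) ` S) \<le> q^n * card (cl n m ` S) \<and> finite (cl n (Suc m) ` S)"
  proof (rule fiber_count_le[OF fin mapsto])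
    fix b assume "b \<in> cl n m ` S"
    then obtain x where x: "x \<in> S" "b = cl n m x" by blast
    have xo: "x \<in> obox nabs n" using x S by auto
    have F: "finite (cl n (Suc m) ` cl n m x)" "card (cl n (Suc m) ` cl n m x) = q^n"
      using split[OF xo] by auto
    have E: "{a \<in> cl n (Suc m) ` S. co n m a = b} \<subseteq> cl n (Suc m) ` cl n m x"
      unfolding x(2) fib[OF x(1)] by (rule sub)
    show "finite {a \<in> cl n (Suc m) ` S. co n m a = b}"
      using finite_subset[OF E F(1)] .
    show "card {a \<in> cl n (Suc m) ` S. co n m a = b} \<le> q^n"
      using card_mono[OF F(1) E] F(2) by simp
  qed
  assume P: "per n m S"
  show "card (cl n (Suc m) ` S) = q^n * card (cl n m ` S)"
  proof (rule fiber_count[OF fin mapsto, THEN conjunct1])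
    fix b assume "b \<in> cl n m ` S"
    then obtain x where x: "x \<in> S" "b = cl n m x" by blast
    have xo: "x \<in> obox nabs n" using x S by auto
    have e: "{y\<in>S. y \<in> cl n m x} = cl n m x" using P x(1) by (auto simp: per_def cl_def)
    show "finite {a \<in> cl n (Suc m) ` S. co n m a = b}"
      using fib[OF x(1)] split[OF xo] e x(2) by simp
    show "card {a \<in> cl n (Suc m) ` S. co n m a = b} = q^n"
      using fib[OF x(1)] split[OF xo] e x(2) by simp
  qed
qed

lemma per_ob: "per n m (obox nabs n)" by (simp add: per_def)
lemma per_mono: "per n m S \<Longrightarrow> m \<le> m' \<Longrightarrow> per n m' S"
  unfolding per_def using vc_mono' by blast

lemma cl0: "x \<in> obox nabs n \<Longrightarrow> cl n 0 x = obox nabs n"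
  unfolding cl_def using vc0 by auto

lemma zero_ob: "(\<lambda>i. 0) \<in> obox nabs n" by (simp add: ob_iff)

lemma ob_card: "card (cl n m ` obox nabs n) = q^(n*m) \<and> finite (cl n m ` obox nabs n)"
proof (induction m)
  case 0
  have "cl n 0 ` obox nabs n = {obox nabs n}" using cl0 zero_ob by blast
  thus ?case by simp
next
  case (Suc m)
  have "card (cl n (Suc m) ` obox nabs n) = q^n * card (cl n m ` obox nabs n)"
    using cnt_step(2)[OF _ Suc[THEN conjunct2] per_ob] by simp
  moreover have "finite (cl n (Suc m) ` obox nabs n)"
    using cnt_step(1)[OF _ Suc[THEN conjunct2]] by simp
  ultimately show ?case using Suc by (simp add: power_add mult.commute power_mult)
qed

lemma fin_cl: "S \<subseteq> obox nabs n \<Longrightarrow> finite (cl n m ` S)"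
  using ob_card finite_subset image_mono by metis

lemma cnt_ob: "cnt n m (obox nabs n) = q^(n*m)" using ob_card by (simp add: cnt_def)

lemma cnt_step_le: "S \<subseteq> obox nabs n \<Longrightarrow> cnt n (Suc m) S \<le> q^n * cnt n m S"
  using cnt_step(1)[OF _ fin_cl] by (simp add: cnt_def)
lemma cnt_step_eq: "per n m S \<Longrightarrow> cnt n (Suc m) S = q^n * cnt n m S"
  using cnt_step(2)[OF _ fin_cl] per_sub by (simp add: cnt_def)

lemma cnt_add_eq: "per n m S \<Longrightarrow> cnt n (m+k) S = q^(n*k) * cnt n m S"
proof (induction k)
  case 0 thus ?case by simp
next
  case (Suc k)
  have "per n (m+k) S" using per_mono Suc by simp
  thus ?case using cnt_step_eq[of n "m+k" S] Suc by (simp add: power_add power_mult mult.commute)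
qed

lemma cnt_add_le: "S \<subseteq> obox nabs n \<Longrightarrow> cnt n (m+k) S \<le> q^(n*k) * cnt n m S"
proof (induction k)
  case 0 thus ?case by simp
next
  case (Suc k)
  have "cnt n (m + Suc k) S \<le> q^n * cnt n (m+k) S" using cnt_step_le[OF Suc.prems] by simp
  also have "\<dots> \<le> q^n * (q^(n*k) * cnt n m S)" using Suc by simp
  finally show ?case by (simp add: power_add power_mult mult.commute mult.left_commute)
qed

lemma haar: assumes P: "per n M S"
  shows "haar_meas nabs n S = real (cnt n M S) / real q^(n*M)"
proof -
  define g where "g m = real (cnt n m S) / real q^(n*m)" for m
  have hq: "real q > 0" using q_ge2 by simp
  have ge: "g M \<le> g m" for m
  proof (cases "m \<le> M")
    case True
    then obtain k where k: "M = m + k" using le_Suc_ex by blast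
    have "cnt n M S \<le> q^(n*k) * cnt n m S" using cnt_add_le P per_sub k by blast
    hence "real (cnt n M S) \<le> real q^(n*k) * real (cnt n m S)" by (metis of_nat_le_iff of_nat_mult of_nat_power)
    hence "real (cnt n M S) / real q^(n*M) \<le> real q^(n*k) * real (cnt n m S) / real q^(n*M)"
      using hq by (simp add: divide_right_mono)
    also have "\<dots> = real (cnt n m S) / real q^(n*m)" using hq k by (simp add: power_add field_simps)
    finally show ?thesis by (simp add: g_def)
  next
    case False
    then obtain k where k: "m = M + k" using le_Suc_ex nat_le_linear by blast
    have "cnt n m S = q^(n*k) * cnt n M S" using cnt_add_eq P k by blast
    hence "g m = g M" using hq k by (simp add: g_def power_add field_simps)
    thus ?thesis by simp
  qed
  have "haar_meas nabs n S = Inf (range g)" unfolding haar_meas_def g_def cnt_def cl_def by simp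
  also have "\<dots> = g M" by (rule cInf_eq_minimum) (auto simp: ge)
  finally show ?thesis by (simp add: g_def)
qed

lemma two_sc: "nabs (2*a - 2*b) \<le> p^(Suc m) \<longleftrightarrow> nabs (a - b) \<le> p^m"
proof -
  have "2*a - 2*b = 2*(a-b)" by (simp add: algebra_simps)
  hence "nabs (2*a - 2*b) = p * nabs (a - b)" using mult[of 2 "a-b"] by (simp add: n2)
  thus ?thesis using p_pos by simp
qed

definition sc2 :: "(nat \<Rightarrow> 'k) \<Rightarrow> (nat \<Rightarrow> 'k)" where "sc2 x = (\<lambda>i. 2 * x i)"

lemma sc2_ob: "x \<in> obox nabs n \<Longrightarrow> sc2 x \<in> obox nabs n"
  by (auto simp: sc2_def ob_iff intro: oI o_numeral)

lemma cnt_sc2: assumes S: "S \<subseteq> obox nabs n" shows "cnt n (Suc m) (sc2 ` S) = cnt n m S"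
proof -
  have "cl n (Suc m) ` sc2 ` S = (cl n (Suc m) \<circ> sc2) ` S" by (simp add: image_comp)
  moreover have "card ((cl n (Suc m) \<circ> sc2) ` S) = card (cl n m ` S)"
  proof (rule card_image_eqrel[THEN conjunct1])
    fix x y assume xy: "x \<in> S" "y \<in> S"
    hence o: "x \<in> obox nabs n" "y \<in> obox nabs n" using S by auto
    have "(cl n (Suc m) \<circ> sc2) x = (cl n (Suc m) \<circ> sc2) y \<longleftrightarrow> vcong nabs n (Suc m) (sc2 x) (sc2 y)"
      using cl_eq sc2_ob o by simp
    also have "\<dots> \<longleftrightarrow> vcong nabs n m x y" unfolding vc sc2_def
      using two_sc by simp
    also have "\<dots> \<longleftrightarrow> cl n m x = cl n m y" using cl_eq o by simp
    finally show "(cl n (Suc m) \<circ> sc2) x = (cl n (Suc m) \<circ> sc2) y \<longleftrightarrow> cl n m x = cl n m y" .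
  qed
  ultimately show ?thesis by (simp add: cnt_def)
qed

lemma cnt_map:
  assumes S: "S \<subseteq> obox nabs n" and phi: "\<And>x. x \<in> obox nabs n \<Longrightarrow> \<phi> x \<in> obox nabs n"
    and pres: "\<And>x y. x \<in> obox nabs n \<Longrightarrow> y \<in> obox nabs n \<Longrightarrow> vcong nabs n m (\<phi> x) (\<phi> y) \<longleftrightarrow> vcong nabs n m x y"
  shows "cnt n m (\<phi> ` S) = cnt n m S"
proof -
  have "cl n m ` \<phi> ` S = (cl n m \<circ> \<phi>) ` S" by (simp add: image_comp)
  moreover have "card ((cl n m \<circ> \<phi>) ` S) = card (cl n m ` S)"
  proof (rule card_image_eqrel[THEN conjunct1])
    fix x y assume xy: "x \<in> S" "y \<in> S"
    hence o: "x \<in> obox nabs n" "y \<in> obox nabs n" using S by auto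
    show "(cl n m \<circ> \<phi>) x = (cl n m \<circ> \<phi>) y \<longleftrightarrow> cl n m x = cl n m y"
      using cl_eq[OF phi[OF o(1)] phi[OF o(2)]] cl_eq[OF o] pres[OF o] by simp
  qed
  ultimately show ?thesis by (simp add: cnt_def)
qed

lemma cnt_union: assumes "per n m S" "per n m T" "S \<inter> T = {}"
  shows "cnt n m (S \<union> T) = cnt n m S + cnt n m T"
proof -
  have d: "cl n m ` S \<inter> cl n m ` T = {}"
  proof (rule ccontr)
    assume "cl n m ` S \<inter> cl n m ` T \<noteq> {}"
    then obtain x y where xy: "x \<in> S" "y \<in> T" "cl n m x = cl n m y" by blast
    hence o: "x \<in> obox nabs n" "y \<in> obox nabs n" using assms per_sub by blast+
    hence "vcong nabs n m x y" using cl_eq xy by blast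
    hence "y \<in> S" using assms(1) xy o unfolding per_def by blast
    thus False using xy assms(3) by blast
  qed
  have f: "finite (cl n m ` S)" "finite (cl n m ` T)" using fin_cl per_sub assms by blast+
  show ?thesis unfolding cnt_def image_Un using card_Un_disjoint[OF f d] by simp
qed

lemma cnt_mono: "S \<subseteq> T \<Longrightarrow> T \<subseteq> obox nabs n \<Longrightarrow> cnt n m S \<le> cnt n m T"
  unfolding cnt_def by (rule card_mono) (auto intro: fin_cl)

definition vec1 :: "'k \<Rightarrow> nat \<Rightarrow> 'k" where "vec1 c = (\<lambda>i. if i = 0 then c else 0)"

lemma vec1_ob: "vec1 c \<in> obox nabs 1 \<longleftrightarrow> nabs c \<le> 1" by (auto simp: vec1_def ob_iff)
lemma vec1_vc: "vcong nabs 1 k (vec1 c) (vec1 c') \<longleftrightarrow> nabs (c - c') \<le> p^k" by (simp add: vec1_def vc)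
lemma vec1_eta: "t \<in> obox nabs 1 \<Longrightarrow> t = vec1 (t 0)" by (auto simp: vec1_def ob_iff fun_eq_iff)

lemma count_by_value:
  assumes S: "S \<subseteq> obox nabs n" and T: "T \<subseteq> obox nabs 1"
    and g: "\<And>x. x \<in> S \<Longrightarrow> vec1 (g x) \<in> T"
    and compat: "\<And>x y. x \<in> S \<Longrightarrow> y \<in> S \<Longrightarrow> vcong nabs n m x y \<Longrightarrow> nabs (g x - g y) \<le> p^k"
    and N: "\<And>c. vec1 c \<in> T \<Longrightarrow> cnt n m {x\<in>S. nabs (g x - c) \<le> p^k} = N"
  shows "cnt n m S = N * cnt 1 k T"
proof -
  define f where "f X = cl 1 k (vec1 (g (SOME y. y \<in> S \<and> cl n m y = X)))" for X
  have gS: "nabs (g x) \<le> 1" if "x \<in> S" for x using g[OF that] T vec1_ob by blast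
  have fx: "f (cl n m x) = cl 1 k (vec1 (g x))" if x: "x \<in> S" for x
  proof -
    have "\<exists>y. y \<in> S \<and> cl n m y = cl n m x" using x by blast
    hence "(SOME y. y \<in> S \<and> cl n m y = cl n m x) \<in> S \<and> cl n m (SOME y. y \<in> S \<and> cl n m y = cl n m x) = cl n m x"
      by (rule someI_ex)
    then obtain y where y: "y \<in> S" "cl n m y = cl n m x" "(SOME y. y \<in> S \<and> cl n m y = cl n m x) = y" by blast
    have "vcong nabs n m y x" using cl_eq y S x by blast
    hence "nabs (g y - g x) \<le> p^k" using compat y x by blast
    hence "vcong nabs 1 k (vec1 (g y)) (vec1 (g x))" using vec1_vc by simp
    moreover have "vec1 (g y) \<in> obox nabs 1" "vec1 (g x) \<in> obox nabs 1" using vec1_ob gS y x by auto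
    ultimately have "cl 1 k (vec1 (g y)) = cl 1 k (vec1 (g x))" using cl_eq by blast
    thus ?thesis unfolding f_def using y by simp
  qed
  have mapsto: "f ` (cl n m ` S) \<subseteq> cl 1 k ` T" using fx g by auto
  have main: "card (cl n m ` S) = N * card (cl 1 k ` T) \<and> finite (cl n m ` S)"
  proof (rule fiber_count[OF fin_cl[OF T] mapsto])
    fix b assume "b \<in> cl 1 k ` T"
    then obtain t where t: "t \<in> T" "b = cl 1 k t" by blast
    have te: "t = vec1 (t 0)" using vec1_eta T t by blast
    have t0: "nabs (t 0) \<le> 1" using T t te vec1_ob by (metis subsetD)
    have fib: "{X \<in> cl n m ` S. f X = b} = cl n m ` {x\<in>S. nabs (g x - t 0) \<le> p^k}"
    proof -
      have "f (cl n m x) = b \<longleftrightarrow> nabs (g x - t 0) \<le> p^k" if "x \<in> S" for x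
      proof -
        have o: "vec1 (g x) \<in> obox nabs 1" "vec1 (t 0) \<in> obox nabs 1" using vec1_ob gS[OF that] t0 by auto
        have "f (cl n m x) = b \<longleftrightarrow> cl 1 k (vec1 (g x)) = cl 1 k (vec1 (t 0))"
          using fx[OF that] t te by simp
        also have "\<dots> \<longleftrightarrow> nabs (g x - t 0) \<le> p^k" using cl_eq[OF o] vec1_vc by simp
        finally show ?thesis .
      qed
      thus ?thesis by auto
    qed
    show "finite {X \<in> cl n m ` S. f X = b}" unfolding fib by (rule fin_cl) (use S in auto)
    show "card {X \<in> cl n m ` S. f X = b} = N" unfolding fib using N[of "t 0"] te t by (simp add: cnt_def)
  qed
  thus ?thesis by (simp add: cnt_def)
qed

end



context lfu begin

definition qm :: "(nat \<Rightarrow> 'k) \<Rightarrow> (nat \<Rightarrow> 'k) \<Rightarrow> nat \<Rightarrow> 'k" where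
"qm x y = (\<lambda>i. if i = 0 then x 0*y 0 - x 1*y 1 + a*x 2*y 2 + a*x 3*y 3
  else if i = 1 then x 0*y 1 + x 1*y 0 - a*x 2*y 3 + a*x 3*y 2
  else if i = 2 then x 0*y 2 + x 2*y 0 - x 1*y 3 + x 3*y 1
  else if i = 3 then x 0*y 3 + x 3*y 0 + x 1*y 2 - x 2*y 1 else 0)"

definition qcj :: "(nat \<Rightarrow> 'k) \<Rightarrow> nat \<Rightarrow> 'k" where
  "qcj d = (\<lambda>i. if i = 0 then d 0 else if i < 4 then - d i else 0)"
definition qinv :: "(nat \<Rightarrow> 'k) \<Rightarrow> nat \<Rightarrow> 'k" where
  "qinv d = (\<lambda>i. qcj d i / Bf d)"

lemma a_o: "nabs a \<le> 1" unfolding a_def using u by (intro oI) auto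

lemma Bf_qm: "Bf (qm d x) = Bf d * Bf x"
  unfolding Bf_def qm_def by (simp add: algebra_simps power2_eq_square)

lemma qm_conj: "i < 4 \<Longrightarrow> qm (qcj d) (qm d x) i = Bf d * x i"
  unfolding Bf_def qm_def qcj_def
  by (auto simp: algebra_simps power2_eq_square numeral_eq_Suc less_Suc_eq)

lemma qm_conj2: "i < 4 \<Longrightarrow> qm d (qm (qcj d) x) i = Bf d * x i"
  unfolding Bf_def qm_def qcj_def
  by (auto simp: algebra_simps power2_eq_square numeral_eq_Suc less_Suc_eq)

lemma qm_scal1: "qm (\<lambda>i. c * d i) x i = c * qm d x i"
  unfolding qm_def by (simp add: algebra_simps)
lemma qm_scal2: "qm d (\<lambda>i. c * x i) i = c * qm d x i"
  unfolding qm_def by (simp add: algebra_simps)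

lemma qm_diff: "qm d x i - qm d y i = qm d (\<lambda>j. x j - y j) i"
  unfolding qm_def by (simp add: algebra_simps)

lemma hm: "nabs c \<le> 1 \<Longrightarrow> nabs t \<le> M \<Longrightarrow> nabs (c*t) \<le> M"
  using small_mult[of t M c] by (simp add: mult.commute)

lemma qm_bound: assumes d: "\<forall>j<4. nabs (d j) \<le> 1" and z: "\<forall>j<4. nabs (z j) \<le> M" and "M \<ge> 0"
  shows "nabs (qm d z i) \<le> M"
proof -
  have d': "nabs (d 0) \<le> 1" "nabs (d 1) \<le> 1" "nabs (d 2) \<le> 1" "nabs (d 3) \<le> 1" using d by auto
  have z': "nabs (z 0) \<le> M" "nabs (z 1) \<le> M" "nabs (z 2) \<le> M" "nabs (z 3) \<le> M" using z by auto
  have ad: "nabs (a * d j) \<le> 1" if "nabs (d j) \<le> 1" for j using a_o that by (intro oI)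
  show ?thesis unfolding qm_def using d' z' ad assms(3) a_o
    by (auto intro!: ultra_le ultra_le_diff hm simp: mult.assoc[symmetric])
qed

lemma qm_ob: "d \<in> obox nabs 4 \<Longrightarrow> x \<in> obox nabs 4 \<Longrightarrow> qm d x \<in> obox nabs 4"
  unfolding ob_iff using qm_bound[of d x 1] by (auto simp: qm_def)

lemma qm_vc: "d \<in> obox nabs 4 \<Longrightarrow> vcong nabs 4 m x y \<Longrightarrow> vcong nabs 4 m (qm d x) (qm d y)"
  unfolding vc qm_diff using p_pos by (intro allI impI qm_bound) (auto simp: ob_iff)

lemma qinv_ob: assumes "d \<in> obox nabs 4" "nabs (Bf d) = 1" shows "qinv d \<in> obox nabs 4"
  using assms unfolding ob_iff qinv_def qcj_def by (auto simp: ndiv)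

lemma qm_qinv: "qm (qinv d) y i = (1 / Bf d) * qm (qcj d) y i"
proof -
  have "qinv d = (\<lambda>i. (1 / Bf d) * qcj d i)" unfolding qinv_def by auto
  thus ?thesis by (simp only: qm_scal1)
qed

lemma qm_inv1: assumes "x \<in> obox nabs 4" "Bf d \<noteq> 0" shows "qm (qinv d) (qm d x) = x"
proof (rule ext)
  fix i show "qm (qinv d) (qm d x) i = x i"
  proof (cases "i < 4")
    case True
    have "qm (qinv d) (qm d x) i = (1 / Bf d) * qm (qcj d) (qm d x) i" by (rule qm_qinv)
    thus ?thesis using qm_conj[OF True] assms(2) by simp
  next
    case False thus ?thesis using assms(1) by (simp add: qm_def ob_iff)
  qed
qed

lemma qm_inv2: assumes "x \<in> obox nabs 4" "Bf d \<noteq> 0" shows "qm d (qm (qinv d) x) = x"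
proof (rule ext)
  fix i show "qm d (qm (qinv d) x) i = x i"
  proof (cases "i < 4")
    case True
    have "qm (qinv d) x = (\<lambda>j. (1 / Bf d) * qm (qcj d) x j)" using qm_qinv by (auto simp: fun_eq_iff)
    hence "qm d (qm (qinv d) x) i = (1 / Bf d) * qm d (qm (qcj d) x) i" by (simp only: qm_scal2)
    thus ?thesis using qm_conj2[OF True] assms(2) by simp
  next
    case False thus ?thesis using assms(1) by (simp add: qm_def ob_iff)
  qed
qed

lemma Lmap:
  assumes d: "d \<in> obox nabs 4" "nabs (Bf d) = 1"
    and W: "W \<subseteq> obox nabs 4" "\<And>x. x \<in> obox nabs 4 \<Longrightarrow> qm d x \<in> W \<longleftrightarrow> x \<in> W"
    and r: "nabs (Bf d * \<rho> - \<rho>') \<le> p^k"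
  shows "cnt 4 m {x\<in>W. nabs (Bf x - \<rho>') \<le> p^k} = cnt 4 m {x\<in>W. nabs (Bf x - \<rho>) \<le> p^k}"
proof -
  have B0: "Bf d \<noteq> 0" using d by auto
  have im: "qm d ` {x\<in>W. nabs (Bf x - \<rho>) \<le> p^k} = {x\<in>W. nabs (Bf x - \<rho>') \<le> p^k}"
  proof
    show "qm d ` {x\<in>W. nabs (Bf x - \<rho>) \<le> p^k} \<subseteq> {x\<in>W. nabs (Bf x - \<rho>') \<le> p^k}"
    proof
      fix y assume "y \<in> qm d ` {x\<in>W. nabs (Bf x - \<rho>) \<le> p^k}"
      then obtain x where x: "x \<in> W" "nabs (Bf x - \<rho>) \<le> p^k" "y = qm d x" by blast
      have "Bf y - \<rho>' = Bf d * (Bf x - \<rho>) + (Bf d * \<rho> - \<rho>')" using x(3) Bf_qm by (simp add: algebra_simps)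
      moreover have "nabs (Bf d * (Bf x - \<rho>)) \<le> p^k" using x d by (simp add: mult)
      hence "nabs (Bf d * (Bf x - \<rho>) + (Bf d * \<rho> - \<rho>')) \<le> p^k" using r by (rule ultra_le)
      ultimately have "nabs (Bf y - \<rho>') \<le> p^k" by (simp add: add_diff_eq)
      moreover have "y \<in> W" using W x by auto
      ultimately show "y \<in> {x\<in>W. nabs (Bf x - \<rho>') \<le> p^k}" by simp
    qed
  next
    show "{x\<in>W. nabs (Bf x - \<rho>') \<le> p^k} \<subseteq> qm d ` {x\<in>W. nabs (Bf x - \<rho>) \<le> p^k}"
    proof
      fix y assume y: "y \<in> {x\<in>W. nabs (Bf x - \<rho>') \<le> p^k}"
      have yo: "y \<in> obox nabs 4" using y W by auto
      define x where "x = qm (qinv d) y"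
      have xo: "x \<in> obox nabs 4" using qm_ob qinv_ob d yo x_def by blast
      have yx: "y = qm d x" using qm_inv2[OF yo B0] x_def by simp
      have xW: "x \<in> W" using W(2)[OF xo] yx y by simp
      have "Bf d * (Bf x - \<rho>) = (Bf y - \<rho>') - (Bf d * \<rho> - \<rho>')" using yx Bf_qm by (simp add: algebra_simps)
      moreover have "nabs ((Bf y - \<rho>') - (Bf d * \<rho> - \<rho>')) \<le> p^k" using y r by (intro ultra_le_diff[of "Bf y - \<rho>'"]) auto
      ultimately have "nabs (Bf d * (Bf x - \<rho>)) \<le> p^k" by simp
      hence "nabs (Bf x - \<rho>) \<le> p^k" using d by (simp add: mult)
      thus "y \<in> qm d ` {x\<in>W. nabs (Bf x - \<rho>) \<le> p^k}" using xW yx by blast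
    qed
  qed
  have "cnt 4 m (qm d ` {x\<in>W. nabs (Bf x - \<rho>) \<le> p^k}) = cnt 4 m {x\<in>W. nabs (Bf x - \<rho>) \<le> p^k}"
  proof (rule cnt_map)
    show "{x\<in>W. nabs (Bf x - \<rho>) \<le> p^k} \<subseteq> obox nabs 4" using W by auto
    show "\<And>x. x \<in> obox nabs 4 \<Longrightarrow> qm d x \<in> obox nabs 4" using qm_ob d by blast
    fix x y assume o: "x \<in> obox nabs 4" "y \<in> obox nabs 4"
    show "vcong nabs 4 m (qm d x) (qm d y) \<longleftrightarrow> vcong nabs 4 m x y"
    proof
      assume "vcong nabs 4 m (qm d x) (qm d y)"
      hence "vcong nabs 4 m (qm (qinv d) (qm d x)) (qm (qinv d) (qm d y))" using qm_vc qinv_ob d by blast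
      thus "vcong nabs 4 m x y" using qm_inv1 o B0 by simp
    qed (use qm_vc d in blast)
  qed
  thus ?thesis using im by simp
qed

end



context lf begin

lemma sqrt2: assumes c: "nabs c \<le> 1" shows "\<exists>s. nabs s \<le> 1 \<and> nabs (s^2 - c) \<le> p"
proof -
  define Oo where "Oo = ointeg nabs"
  have sq: "(\<lambda>s. rc (s^2)) ` Oo \<subseteq> rc ` Oo" unfolding Oo_def ointeg_def by (auto simp: power_le_one)
  have eq: "rc (s^2) = rc (t^2) \<longleftrightarrow> rc s = rc t" if "s \<in> Oo" "t \<in> Oo" for s t
  proof -
    have so: "nabs s \<le> 1" "nabs t \<le> 1" using that Oo_def ointeg_def by auto
    have s2: "nabs (s^2) \<le> 1" "nabs (t^2) \<le> 1" using so by (auto simp: power_le_one)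
    have "nabs (s^2 - t^2) \<le> p \<longleftrightarrow> nabs (s - t) \<le> p"
    proof
      assume h: "nabs (s^2 - t^2) \<le> p"
      have "(s-t)^2 = (s^2 - t^2) - 2*(t*(s - t))" by (simp add: algebra_simps power2_eq_square)
      moreover have "nabs (2*(t*(s-t))) \<le> p" using so by (intro two_mult_le oI) auto
      ultimately have "nabs ((s-t)^2) \<le> p" using h ultra_le_diff by simp
      thus "nabs (s - t) \<le> p" using sq_small so by (meson oI(3))
    next
      assume h: "nabs (s - t) \<le> p"
      have "s^2 - t^2 = (s - t) * (s + t)" by (simp add: algebra_simps power2_eq_square)
      moreover have "nabs (s + t) \<le> 1" using so by (intro oI)
      ultimately show "nabs (s^2 - t^2) \<le> p" using small_mult h by simp
    qed
    thus ?thesis using rc_eq so s2 by simp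
  qed
  have "card ((\<lambda>s. rc (s^2)) ` Oo) = card (rc ` Oo) \<and> (finite ((\<lambda>s. rc (s^2)) ` Oo) \<longleftrightarrow> finite (rc ` Oo))"
    by (rule card_image_eqrel) (rule eq)
  hence im: "(\<lambda>s. rc (s^2)) ` Oo = rc ` Oo" using sq fin_rc Oo_def card_subset_eq by metis
  have "c \<in> Oo" using c unfolding Oo_def ointeg_def by simp
  hence "rc c \<in> rc ` Oo" by (rule imageI)
  hence "rc c \<in> (\<lambda>s. rc (s^2)) ` Oo" using im by simp
  then obtain s where s0: "s \<in> Oo" "rc c = rc (s^2)" by (rule imageE)
  hence s: "s \<in> Oo" "rc (s^2) = rc c" by auto
  have "nabs s \<le> 1" using s unfolding Oo_def ointeg_def by simp
  moreover have "nabs (s^2 - c) \<le> p" using s(2) rc_eq[of "s^2" c] c \<open>nabs s \<le> 1\<close> by (simp add: power_le_one)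
  ultimately show ?thesis by blast
qed

end

context lfu begin

definition mk4 :: "'k \<Rightarrow> 'k \<Rightarrow> 'k \<Rightarrow> 'k \<Rightarrow> nat \<Rightarrow> 'k" where
  "mk4 w0 w1 w2 w3 = (\<lambda>i. if i = 0 then w0 else if i = 1 then w1 else if i = 2 then w2 else if i = 3 then w3 else 0)"

lemma Bf_mk4: "Bf (mk4 w0 w1 w2 w3) = w0^2 + w1^2 - a*(w2^2 + w3^2)"
  by (simp add: Bf_def mk4_def)
lemma mk4_ob: "nabs w0 \<le> 1 \<Longrightarrow> nabs w1 \<le> 1 \<Longrightarrow> nabs w2 \<le> 1 \<Longrightarrow> nabs w3 \<le> 1 \<Longrightarrow> mk4 w0 w1 w2 w3 \<in> obox nabs 4"
  by (auto simp: mk4_def ob_iff)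

lemma eps_exists: assumes k: "k \<ge> 1" and m: "nabs m \<le> 1"
  shows "\<exists>e\<in>obox nabs 4. nabs (Bf e - (1 + 2^k*m)) \<le> p^(Suc k)"
proof -
  consider "k = 1" | "k = 2" | "k \<ge> 3" using k by linarith
  thus ?thesis
  proof cases
    case 1
    have "nabs (m+u) \<le> 1" using m u by (intro oI) auto
    then obtain y where y: "nabs y \<le> 1" "nabs (y^2 - (m+u)) \<le> p" using sqrt2 by blast
    define e where "e = mk4 (1+y) (1+y) 1 0"
    have eo: "e \<in> obox nabs 4" unfolding e_def using y by (intro mk4_ob oI) auto
    have eq: "Bf e - (1 + 2^k*m) = 2 * (2*y + (y^2 - (m+u)))"
      unfolding e_def Bf_mk4 a_def 1 by (simp add: algebra_simps power2_eq_square)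
    have h: "nabs (2*y + (y^2 - (m+u))) \<le> p" using y two_mult_le ultra_le by blast
    have "nabs (2 * (2*y + (y^2 - (m+u)))) \<le> p * p" using h p_pos unfolding mult n2 by (simp add: mult_left_mono)
    hence "nabs (Bf e - (1 + 2^k*m)) \<le> p * p" unfolding eq .
    thus ?thesis using eo 1 by (auto simp: power2_eq_square)
  next
    case 2
    obtain z where z: "nabs z \<le> 1" "nabs (z^2 - m) \<le> p" using sqrt2 m by blast
    define e where "e = mk4 1 (2*z) 0 0"
    have eo: "e \<in> obox nabs 4" unfolding e_def using z by (intro mk4_ob oI) auto
    have eq: "Bf e - (1 + 2^k*m) = 4 * (z^2 - m)"
      unfolding e_def Bf_mk4 2 by (simp add: algebra_simps power2_eq_square)
    have "nabs (4 * (z^2 - m)) \<le> p^2 * p" using z p_pos unfolding mult n4 by (simp add: mult_left_mono)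
    hence "nabs (Bf e - (1 + 2^k*m)) \<le> p^2 * p" unfolding eq .
    moreover have "p^2 * p = p^(Suc k)" using 2 by (simp add: numeral_eq_Suc)
    ultimately show ?thesis using eo by auto
  next
    case 3
    define e where "e = mk4 (1 + 2^(k-1)*m) 0 0 0"
    have eo: "e \<in> obox nabs 4" unfolding e_def using m by (intro mk4_ob oI) (auto simp: mult p_pos less_imp_le power_le_one p_lt1 n2 intro: mult_le_one)
    have kk: "k = Suc (k-1)" using 3 by simp
    have "Bf e - (1 + 2^k*m) = (2^(k-1)*m)^2"
      unfolding e_def Bf_mk4 by (subst kk) (simp add: algebra_simps power2_eq_square)
    hence "nabs (Bf e - (1 + 2^k*m)) = (p^(k-1))^2 * nabs m ^2" by (simp add: mult power_mult_distrib n2)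
    also have "\<dots> \<le> (p^(k-1))^2" using m p_pos by (simp add: mult_left_le power_le_one)
    also have "\<dots> = p^(2*(k-1))" by (simp add: power_mult[symmetric] mult.commute)
    also have "\<dots> \<le> p^(Suc k)" using ppow_le_iff[of "2*(k-1)" "Suc k"] 3 by linarith
    finally show ?thesis using eo by blast
  qed
qed

lemma nrd_surj: assumes c: "nabs c = 1" shows "\<exists>d\<in>obox nabs 4. nabs (Bf d - c) \<le> p^k"
proof (induction k)
  case 0
  have "mk4 1 0 0 0 \<in> obox nabs 4" by (intro mk4_ob) auto
  moreover have "nabs (Bf (mk4 1 0 0 0) - c) \<le> 1" using c by (simp add: Bf_mk4 ultra_le_diff)
  ultimately show ?case by auto
next
  case (Suc k)
  show ?case
  proof (cases "k = 0")
    case True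
    have "nabs c \<le> 1" using c by simp
    then obtain s where s: "nabs s \<le> 1" "nabs (s^2 - c) \<le> p" using sqrt2 by blast
    have "mk4 s 0 0 0 \<in> obox nabs 4" using s by (intro mk4_ob) auto
    moreover have "nabs (Bf (mk4 s 0 0 0) - c) \<le> p" using s by (simp add: Bf_mk4)
    ultimately show ?thesis using True by auto
  next
    case False
    obtain d where d: "d \<in> obox nabs 4" "nabs (Bf d - c) \<le> p^k" using Suc by blast
    define N where "N = Bf d"
    have "p^k \<le> p" using False ppow_le_iff[of k 1] by simp
    hence "nabs (N - c) < 1" using d p_lt1 N_def by simp
    hence N1: "nabs N = 1" using ultra_eq[of "N - c" c] c by (simp add: commute)
    hence N0: "N \<noteq> 0" by auto
    define m where "m = (c - N) / (N * 2^k)"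
    have m1: "nabs m \<le> 1" using d N1 p_pos commute[of c N] by (simp add: m_def ndiv mult N_def n2 divide_le_eq)
    have cm: "c = N * (1 + 2^k*m)" using N0 two_ne0 by (simp add: m_def field_simps)
    obtain e where e: "e \<in> obox nabs 4" "nabs (Bf e - (1 + 2^k*m)) \<le> p^(Suc k)"
      using eps_exists[OF _ m1] False by (metis less_one not_less)
    have "Bf (qm d e) - c = N * (Bf e - (1 + 2^k*m))" using cm Bf_qm N_def by (simp add: algebra_simps)
    hence "nabs (Bf (qm d e) - c) \<le> p^(Suc k)" using e N1 by (simp add: mult)
    moreover have "qm d e \<in> obox nabs 4" using qm_ob d e by blast
    ultimately show ?thesis by blast
  qed
qed

end



context lfu begin

definition E :: "nat \<Rightarrow> 'k \<Rightarrow> (nat \<Rightarrow> 'k) set" where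
  "E l \<rho> = {x \<in> obox nabs 4. nabs (Bf x - \<rho>) \<le> p^(Suc l)}"

lemma ob4: "x \<in> obox nabs 4 \<Longrightarrow> nabs (x 0) \<le> 1 \<and> nabs (x 1) \<le> 1 \<and> nabs (x 2) \<le> 1 \<and> nabs (x 3) \<le> 1"
  by (auto simp: ob_iff)
lemma ob4': "x \<in> obox nabs 4 \<Longrightarrow> \<forall>i<4. nabs (x i) \<le> 1" by (auto simp: ob_iff)

lemma Bf_cong: assumes "x \<in> obox nabs 4" "y \<in> obox nabs 4" "vcong nabs 4 m x y"
  shows "nabs (Bf x - Bf y) \<le> p^m"
proof -
  have h1: "nabs (x i - y i) \<le> p^m" if "i < 4" for i
    using assms(3) that by (simp add: vc)
  have h2: "nabs (x i + y i) \<le> 1" if "i < 4" for i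
    using assms(1,2) that by (intro oI) (auto simp: ob_iff)
  have e: "Bf x - Bf y = (x 0 - y 0)*(x 0 + y 0) + (x 1 - y 1)*(x 1 + y 1)
     - a*((x 2 - y 2)*(x 2 + y 2) + (x 3 - y 3)*(x 3 + y 3))"
    unfolding Bf_def by (simp add: algebra_simps power2_eq_square)
  have t: "nabs ((x i - y i)*(x i + y i)) \<le> p^m" if "i < 4" for i
    using small_mult h1[OF that] h2[OF that] by blast
  have t0: "nabs ((x 0 - y 0)*(x 0 + y 0)) \<le> p^m" using t[of 0] by simp
  have t1: "nabs ((x 1 - y 1)*(x 1 + y 1)) \<le> p^m" using t[of 1] by simp
  have t2: "nabs ((x 2 - y 2)*(x 2 + y 2)) \<le> p^m" using t[of 2] by simp
  have t3: "nabs ((x 3 - y 3)*(x 3 + y 3)) \<le> p^m" using t[of 3] by simp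
  have "nabs (a*((x 2 - y 2)*(x 2 + y 2) + (x 3 - y 3)*(x 3 + y 3))) \<le> p^m"
    by (rule hm[OF a_o ultra_le[OF t2 t3]])
  moreover have "nabs ((x 0 - y 0)*(x 0 + y 0) + (x 1 - y 1)*(x 1 + y 1)) \<le> p^m"
    by (rule ultra_le[OF t0 t1])
  ultimately show ?thesis unfolding e by (rule ultra_le_diff[rotated])
qed

lemma per_E: "per 4 (Suc l) (E l \<rho>)"
  unfolding per_def
proof (intro conjI ballI impI)
  show "E l \<rho> \<subseteq> obox nabs 4" by (auto simp: E_def)
  fix x y assume x: "x \<in> E l \<rho>" and y: "y \<in> obox nabs 4" and v: "vcong nabs 4 (Suc l) x y"
  have xo: "x \<in> obox nabs 4" "nabs (Bf x - \<rho>) \<le> p^(Suc l)" using x by (auto simp: E_def)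
  have "nabs (Bf y - Bf x) \<le> p^(Suc l)" using Bf_cong[OF y xo(1)] v vc_sym by blast
  hence "nabs ((Bf y - Bf x) + (Bf x - \<rho>)) \<le> p^(Suc l)" using xo by (intro ultra_le) auto
  thus "y \<in> E l \<rho>" using y by (simp add: E_def)
qed

lemma X_E: "X_l nabs 4 Bf \<rho> l = real (cnt 4 (Suc l) (E l \<rho>)) / real q^(4*Suc l)"
proof -
  have "X_l nabs 4 Bf \<rho> l = haar_meas nabs 4 (E l \<rho>)"
    unfolding X_l_def E_def by (simp add: p_def)
  thus ?thesis using haar[OF per_E] by simp
qed

definition U :: "(nat \<Rightarrow> 'k) set" where "U = {x \<in> obox nabs 4. nabs (Bf x) = 1}"
definition V :: "(nat \<Rightarrow> 'k) set" where "V = {x \<in> obox nabs 4. nabs (Bf x) \<le> p}"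
definition U1 :: "(nat \<Rightarrow> 'k) set" where "U1 = {v \<in> obox nabs 1. nabs (v 0) = 1}"

lemma per_U: "per 4 1 U"
  unfolding per_def
proof (intro conjI ballI impI)
  show "U \<subseteq> obox nabs 4" by (auto simp: U_def)
  fix x y assume x: "x \<in> U" and y: "y \<in> obox nabs 4" and v: "vcong nabs 4 1 x y"
  have xo: "x \<in> obox nabs 4" "nabs (Bf x) = 1" using x by (auto simp: U_def)
  have "nabs (Bf y - Bf x) \<le> p" using Bf_cong[OF y xo(1), of 1] v vc_sym by simp
  hence "nabs (Bf y - Bf x + Bf x) = 1" using ultra_eq[of "Bf y - Bf x" "Bf x"] xo p_lt1 by (simp add: add.commute)
  thus "y \<in> U" using y by (simp add: U_def)
qed

lemma per_V: "per 4 1 V"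
  unfolding per_def
proof (intro conjI ballI impI)
  show "V \<subseteq> obox nabs 4" by (auto simp: V_def)
  fix x y assume x: "x \<in> V" and y: "y \<in> obox nabs 4" and v: "vcong nabs 4 1 x y"
  have xo: "x \<in> obox nabs 4" "nabs (Bf x) \<le> p" using x by (auto simp: V_def)
  have "nabs (Bf y - Bf x) \<le> p" using Bf_cong[OF y xo(1), of 1] v vc_sym by simp
  hence "nabs ((Bf y - Bf x) + Bf x) \<le> p" using xo ultra_le by blast
  thus "y \<in> V" using y by (simp add: V_def)
qed

lemma UV: "obox nabs 4 = U \<union> V" "U \<inter> V = {}"
  unfolding U_def V_def using Bf_int ob4' unit_or p_lt1 by force+

end



context lfu begin

lemma rc_small: "rc ` {y. nabs y \<le> p} = {rc 0}"
proof -
  have "rc y = rc 0" if "nabs y \<le> p" for y using rc_eq[of y 0] that p_lt1 by simp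
  moreover have "nabs (0::'k) \<le> p" using p_pos by simp
  ultimately show ?thesis by blast
qed

lemma ul4d: "nabs A \<le> M \<Longrightarrow> nabs B \<le> M \<Longrightarrow> nabs C \<le> M \<Longrightarrow> nabs D \<le> M \<Longrightarrow> nabs (A - B - C - D) \<le> M"
  by (rule ultra_le_diff[OF ultra_le_diff[OF ultra_le_diff]])
lemma ul4: "nabs A \<le> M \<Longrightarrow> nabs B \<le> M \<Longrightarrow> nabs C \<le> M \<Longrightarrow> nabs D \<le> M \<Longrightarrow> nabs (A + B + C + D) \<le> M"
  by (rule ultra_le[OF ultra_le[OF ultra_le]])

lemma psuc_lt1: "p^(Suc l) < 1" using ppow_le_iff[of "Suc l" 1] p_lt1 by simp

lemma card_rc_o: "card (rc ` {y. nabs y \<le> 1}) = q" using q_def' by (simp add: ointeg_def)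

definition V0 :: "(nat \<Rightarrow> 'k) set" where
  "V0 = {x\<in>obox nabs 4. \<forall>i<4. x i \<in> (if i = 0 then {y. nabs y \<le> p} else {y. nabs y \<le> 1})}"

lemma cnt_V0: "cnt 4 1 V0 = q^3"
proof -
  have "cnt 4 1 V0 = (\<Prod>i<(4::nat). card (rc ` (if i = 0 then {y. nabs y \<le> p} else {y. nabs y \<le> 1})))"
    unfolding cnt_def V0_def
    by (rule cnt1_prod[THEN conjunct1]) (auto split: if_splits simp: p_lt1 less_imp_le intro: order_trans[OF _ less_imp_le[OF p_lt1]])
  also have "\<dots> = q^3" by (simp add: lessThan_nat_numeral rc_small card_rc_o numeral_eq_Suc)
  finally show ?thesis .
qed

definition phi :: "(nat \<Rightarrow> 'k) \<Rightarrow> nat \<Rightarrow> 'k" where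
  "phi x = (\<lambda>i. if i = 0 then x 0 + x 1 + x 2 + x 3 else x i)"
definition phi' :: "(nat \<Rightarrow> 'k) \<Rightarrow> nat \<Rightarrow> 'k" where
  "phi' x = (\<lambda>i. if i = 0 then x 0 - x 1 - x 2 - x 3 else x i)"

lemma phi_ob: "x \<in> obox nabs 4 \<Longrightarrow> phi x \<in> obox nabs 4"
  unfolding ob_iff phi_def by (auto intro!: oI)
lemma phi'_ob: "x \<in> obox nabs 4 \<Longrightarrow> phi' x \<in> obox nabs 4"
  unfolding ob_iff phi'_def by (auto intro!: oI)
lemma phi_phi': "phi (phi' x) = x" by (auto simp: phi_def phi'_def fun_eq_iff)

lemma phi_vc: assumes "x \<in> obox nabs 4" "y \<in> obox nabs 4"
  shows "vcong nabs 4 m (phi x) (phi y) \<longleftrightarrow> vcong nabs 4 m x y"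
proof
  assume h: "vcong nabs 4 m (phi x) (phi y)"
  have h': "nabs (phi x i - phi y i) \<le> p^m" if "i < 4" for i using h that by (simp add: vc)
  have d1: "nabs (x i - y i) \<le> p^m" if "i \<noteq> 0" "i < 4" for i using h'[OF that(2)] that by (simp add: phi_def)
  have "x 0 - y 0 = (phi x 0 - phi y 0) - (x 1 - y 1) - (x 2 - y 2) - (x 3 - y 3)"
    by (simp add: phi_def algebra_simps)
  moreover have "nabs ((phi x 0 - phi y 0) - (x 1 - y 1) - (x 2 - y 2) - (x 3 - y 3)) \<le> p^m"
    using h'[of 0] d1[of 1] d1[of 2] d1[of 3] by (intro ul4d) auto
  ultimately have "nabs (x 0 - y 0) \<le> p^m" by simp
  thus "vcong nabs 4 m x y" using d1 by (auto simp: vc) (metis neq0_conv)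
next
  assume h: "vcong nabs 4 m x y"
  have h': "nabs (x i - y i) \<le> p^m" if "i < 4" for i using h that by (simp add: vc)
  have "phi x 0 - phi y 0 = (x 0 - y 0) + (x 1 - y 1) + (x 2 - y 2) + (x 3 - y 3)"
    by (simp add: phi_def algebra_simps)
  moreover have "nabs ((x 0 - y 0) + (x 1 - y 1) + (x 2 - y 2) + (x 3 - y 3)) \<le> p^m"
    using h'[of 0] h'[of 1] h'[of 2] h'[of 3] by (intro ul4) auto
  ultimately have h0: "nabs (phi x 0 - phi y 0) \<le> p^m" by simp
  show "vcong nabs 4 m (phi x) (phi y)" unfolding vc
  proof (intro allI impI)
    fix i :: nat assume "i < 4"
    thus "nabs (phi x i - phi y i) \<le> p^m" using h0 h' by (cases "i = 0") (auto simp: phi_def)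
  qed
qed

lemma phi_V: "phi ` V = V0"
proof
  show "phi ` V \<subseteq> V0"
  proof
    fix y assume "y \<in> phi ` V"
    then obtain x where x: "x \<in> V" "y = phi x" by blast
    have xo: "x \<in> obox nabs 4" "nabs (Bf x) \<le> p" using x by (auto simp: V_def)
    have "nabs (x 0 + x 1 + x 2 + x 3) \<le> p" using S_small[OF ob4'[OF xo(1)]] xo by simp
    thus "y \<in> V0" using phi_ob[OF xo(1)] x ob4'[OF phi_ob[OF xo(1)]] by (auto simp: V0_def phi_def)
  qed
next
  show "V0 \<subseteq> phi ` V"
  proof
    fix y assume y: "y \<in> V0"
    have yo: "y \<in> obox nabs 4" using y by (simp add: V0_def)
    define x where "x = phi' y"
    have xo: "x \<in> obox nabs 4" using phi'_ob yo x_def by simp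
    have "x 0 + x 1 + x 2 + x 3 = y 0" by (simp add: x_def phi'_def)
    moreover have "\<forall>i<4. y i \<in> (if i = 0 then {y. nabs y \<le> p} else {y. nabs y \<le> 1})"
      using y unfolding V0_def by simp
    hence "nabs (y 0) \<le> p" by (drule_tac x=0 in spec) simp
    ultimately have "nabs (Bf x) \<le> p" using S_small[OF ob4'[OF xo]] by simp
    hence "x \<in> V" using xo by (simp add: V_def)
    thus "y \<in> phi ` V" using phi_phi' x_def by (metis imageI)
  qed
qed

lemma cnt_V: "cnt 4 1 V = q^3"
proof -
  have "cnt 4 1 (phi ` V) = cnt 4 1 V"
    by (rule cnt_map) (use per_V per_sub phi_ob phi_vc in auto)
  thus ?thesis using phi_V cnt_V0 by simp
qed

lemma cnt_U: "cnt 4 1 U = q^4 - q^3"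
proof -
  have "cnt 4 1 (obox nabs 4) = cnt 4 1 U + cnt 4 1 V"
    using UV cnt_union[OF per_U per_V] by simp
  thus ?thesis using cnt_ob[of 4 1] cnt_V by simp
qed

definition Z1 :: "(nat \<Rightarrow> 'k) set" where "Z1 = {v \<in> obox nabs 1. nabs (v 0) \<le> p}"

lemma per_U1: "per 1 1 U1"
  unfolding per_def
proof (intro conjI ballI impI)
  show "U1 \<subseteq> obox nabs 1" by (auto simp: U1_def)
  fix x y assume x: "x \<in> U1" and y: "y \<in> obox nabs 1" and v: "vcong nabs 1 1 x y"
  have "nabs (y 0 - x 0) \<le> p" using v by (simp add: vc commute)
  hence "nabs (y 0 - x 0 + x 0) = 1" using ultra_eq[of "y 0 - x 0" "x 0"] x p_lt1 by (simp add: U1_def add.commute)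
  thus "y \<in> U1" using y by (simp add: U1_def)
qed

lemma per_Z1: "per 1 1 Z1"
  unfolding per_def
proof (intro conjI ballI impI)
  show "Z1 \<subseteq> obox nabs 1" by (auto simp: Z1_def)
  fix x y assume x: "x \<in> Z1" and y: "y \<in> obox nabs 1" and v: "vcong nabs 1 1 x y"
  have "nabs (y 0 - x 0) \<le> p" using v by (simp add: vc commute)
  moreover have "nabs (x 0) \<le> p" using x by (simp add: Z1_def)
  ultimately have "nabs ((y 0 - x 0) + x 0) \<le> p" by (rule ultra_le)
  thus "y \<in> Z1" using y by (simp add: Z1_def)
qed

lemma Z1_sc2: "Z1 = sc2 ` obox nabs 1"
proof
  show "Z1 \<subseteq> sc2 ` obox nabs 1"
  proof
    fix v assume v: "v \<in> Z1"
    define w where "w = (\<lambda>i. v i / 2)"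
    have "w \<in> obox nabs 1" using v div2 by (auto simp: Z1_def w_def ob_iff)
    moreover have "sc2 w = v" using two_ne0 by (simp add: sc2_def w_def)
    ultimately show "v \<in> sc2 ` obox nabs 1" by (metis imageI)
  qed
next
  show "sc2 ` obox nabs 1 \<subseteq> Z1"
  proof
    fix v assume "v \<in> sc2 ` obox nabs 1"
    then obtain w where w: "w \<in> obox nabs 1" "v = sc2 w" by blast
    have "nabs (2 * w 0) \<le> p" using w by (intro two_mult_le) (simp add: ob_iff)
    thus "v \<in> Z1" using sc2_ob[OF w(1)] w by (simp add: Z1_def sc2_def)
  qed
qed

lemma cnt_U1: "cnt 1 (Suc l) U1 = q^(Suc l) - q^l"
proof -
  have uz: "v \<in> U1 \<or> v \<in> Z1" if "v \<in> obox nabs 1" for v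
  proof -
    have "nabs (v 0) \<le> 1" using that by (simp add: ob_iff)
    thus ?thesis using unit_or[of "v 0"] that by (auto simp: U1_def Z1_def)
  qed
  have "obox nabs 1 = U1 \<union> Z1" using uz by (auto simp: U1_def Z1_def)
  moreover have "U1 \<inter> Z1 = {}" unfolding U1_def Z1_def using p_lt1 by auto
  moreover have "per 1 (Suc l) U1" "per 1 (Suc l) Z1" using per_mono per_U1 per_Z1 by auto
  ultimately have "cnt 1 (Suc l) (obox nabs 1) = cnt 1 (Suc l) U1 + cnt 1 (Suc l) Z1"
    using cnt_union by metis
  moreover have "cnt 1 (Suc l) Z1 = q^l" unfolding Z1_sc2 using cnt_sc2[of "obox nabs 1"] cnt_ob by simp
  ultimately show ?thesis using cnt_ob[of 1 "Suc l"] by simp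
qed

lemma E_sub_U: "nabs c = 1 \<Longrightarrow> E l c = {x \<in> U. nabs (Bf x - c) \<le> p^(Suc l)}"
proof -
  assume c: "nabs c = 1"
  have "nabs (Bf x) = 1" if "nabs (Bf x - c) \<le> p^(Suc l)" for x
  proof -
    have "p^(Suc l) < 1" by (rule psuc_lt1)
    thus ?thesis using ultra_eq[of "Bf x - c" c] that c by simp
  qed
  thus ?thesis unfolding E_def U_def by auto
qed

lemma cnt_E_unit_eq: "nabs c = 1 \<Longrightarrow> cnt 4 (Suc l) (E l c) = cnt 4 (Suc l) (E l 1)"
proof -
  assume c: "nabs c = 1"
  obtain d where d: "d \<in> obox nabs 4" "nabs (Bf d - c) \<le> p^(Suc l)" using nrd_surj c by blast
  have d1: "nabs (Bf d) = 1"
  proof -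
    have "p^(Suc l) < 1" by (rule psuc_lt1)
    thus ?thesis using ultra_eq[of "Bf d - c" c] d c by simp
  qed
  have "cnt 4 (Suc l) {x\<in>obox nabs 4. nabs (Bf x - c) \<le> p^(Suc l)} = cnt 4 (Suc l) {x\<in>obox nabs 4. nabs (Bf x - 1) \<le> p^(Suc l)}"
    by (rule Lmap) (use d d1 qm_ob in auto)
  thus ?thesis by (simp add: E_def)
qed

lemma cnt_E_unit: "nabs c = 1 \<Longrightarrow> cnt 4 (Suc l) (E l c) = q^(3*l+3)"
proof -
  assume c: "nabs c = 1"
  define N where "N = cnt 4 (Suc l) (E l 1)"
  have "cnt 4 (Suc l) U = N * cnt 1 (Suc l) U1"
  proof (rule count_by_value)
    show "U \<subseteq> obox nabs 4" by (auto simp: U_def)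
    show "U1 \<subseteq> obox nabs 1" by (auto simp: U1_def)
    show "\<And>x. x \<in> U \<Longrightarrow> vec1 (Bf x) \<in> U1" by (auto simp: U_def U1_def vec1_def ob_iff)
    show "\<And>x y. x \<in> U \<Longrightarrow> y \<in> U \<Longrightarrow> vcong nabs 4 (Suc l) x y \<Longrightarrow> nabs (Bf x - Bf y) \<le> p^(Suc l)"
    proof -
      fix x y assume "x \<in> U" "y \<in> U" "vcong nabs 4 (Suc l) x y"
      thus "nabs (Bf x - Bf y) \<le> p^(Suc l)" by (intro Bf_cong) (auto simp: U_def)
    qed
    fix c' assume "vec1 c' \<in> U1"
    hence c': "nabs c' = 1" by (simp add: U1_def vec1_def)
    show "cnt 4 (Suc l) {x\<in>U. nabs (Bf x - c') \<le> p^(Suc l)} = N"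
      using E_sub_U[OF c'] cnt_E_unit_eq[OF c'] N_def by simp
  qed
  moreover have "cnt 4 (Suc l) U = q^(4*l) * cnt 4 1 U" using cnt_add_eq[OF per_U, of l] by simp
  ultimately have "N * (q^(Suc l) - q^l) = q^(4*l) * (q^4 - q^3)" using cnt_U cnt_U1 by simp
  moreover have "q^(Suc l) - q^l = q^l * (q - 1)" by (simp add: algebra_simps)
  moreover have "q^4 - q^3 = q^3 * (q - 1)" by (simp add: algebra_simps numeral_eq_Suc)
  ultimately have "N * q^l * (q - 1) = q^l * q^(3*l+3) * (q - 1)"
    by (simp add: power_add[symmetric] algebra_simps)
  moreover have "q - 1 > 0" "q^l > 0" using q_ge2 by auto
  ultimately have "N = q^(3*l+3)" by simp
  thus ?thesis using cnt_E_unit_eq[OF c] N_def by simp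
qed

lemma X_unit: "nabs c = 1 \<Longrightarrow> X_l nabs 4 Bf c l = p^(Suc l)"
proof -
  assume c: "nabs c = 1"
  have "X_l nabs 4 Bf c l = real (q^(3*l+3)) / real q^(4*Suc l)" using X_E cnt_E_unit[OF c] by simp
  also have "\<dots> = 1 / real q^(Suc l)"
  proof -
    have e: "4 * Suc l = (3*l+3) + Suc l" by simp
    have "real q^(4*Suc l) = real q^(3*l+3) * real q^(Suc l)" unfolding e by (rule power_add)
    thus ?thesis using q_ge2 by simp
  qed
  also have "\<dots> = p^(Suc l)" using pq by (simp add: power_one_over)
  finally show ?thesis .
qed

end



context lfu begin

definition Dz :: "(nat \<Rightarrow> 'k) set" where "Dz = {x \<in> obox nabs 4. \<forall>i<4. nabs (x i) \<le> p}"
definition C :: "(nat \<Rightarrow> 'k) set" where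
  "C = {x \<in> obox nabs 4. nabs (x 0) = 1 \<and> (\<forall>i<4. nabs (x i - x 0) \<le> p)}"

lemma pp2: "p^2 \<le> p" using ppow_le_iff[of 2 1] by simp

lemma C_char: assumes x: "x \<in> obox nabs 4"
  shows "x \<in> C \<longleftrightarrow> \<not> (\<forall>i<4. nabs (x i) \<le> p) \<and> nabs (Bf x) \<le> p^2"
proof
  assume "x \<in> C"
  hence c: "nabs (x 0) = 1" "\<forall>i<4. nabs (x i - x 0) \<le> p" by (auto simp: C_def)
  have "nabs (Bf x) = p^2" using aniso2 c by blast
  moreover have "\<not> nabs (x 0) \<le> p" using c p_lt1 by simp
  hence "\<not> (\<forall>i<4. nabs (x i) \<le> p)" by (meson zero_less_numeral)
  ultimately show "\<not> (\<forall>i<4. nabs (x i) \<le> p) \<and> nabs (Bf x) \<le> p^2" by simp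
next
  assume h: "\<not> (\<forall>i<4. nabs (x i) \<le> p) \<and> nabs (Bf x) \<le> p^2"
  thus "x \<in> C" using aniso[OF ob4'[OF x]] x by (auto simp: C_def)
qed

lemma C_Bf: "x \<in> C \<Longrightarrow> nabs (Bf x) = p^2"
  using aniso2 by (auto simp: C_def)

lemma not_DC: assumes x: "x \<in> obox nabs 4" "x \<notin> Dz" "x \<notin> C" shows "p^2 < nabs (Bf x)"
proof -
  have "\<not> (\<forall>i<4. nabs (x i) \<le> p)" using x by (auto simp: Dz_def)
  thus ?thesis using C_char[OF x(1)] x(3) by auto
qed

lemma per_Dz: "per 4 1 Dz"
  unfolding per_def
proof (intro conjI ballI impI)
  show "Dz \<subseteq> obox nabs 4" by (auto simp: Dz_def)
  fix x y assume x: "x \<in> Dz" and y: "y \<in> obox nabs 4" and v: "vcong nabs 4 1 x y"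
  have "nabs (y i) \<le> p" if "i < 4" for i
  proof -
    have "nabs ((y i - x i) + x i) \<le> p" using v x that by (intro ultra_le) (auto simp: vc commute Dz_def)
    thus ?thesis by simp
  qed
  thus "y \<in> Dz" using y by (simp add: Dz_def)
qed

lemma per_C: "per 4 1 C"
  unfolding per_def
proof (intro conjI ballI impI)
  show "C \<subseteq> obox nabs 4" by (auto simp: C_def)
  fix x y assume x: "x \<in> C" and y: "y \<in> obox nabs 4" and v: "vcong nabs 4 1 x y"
  have d: "nabs (y i - x i) \<le> p" if "i < 4" for i using v that by (simp add: vc commute)
  have xc: "nabs (x 0) = 1" "\<forall>i<4. nabs (x i - x 0) \<le> p" using x by (auto simp: C_def)
  have "nabs ((y 0 - x 0) + x 0) = 1" using ultra_eq[of "y 0 - x 0" "x 0"] d[of 0] xc p_lt1 by (simp add: add.commute)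
  hence y0: "nabs (y 0) = 1" by simp
  have "nabs (y i - y 0) \<le> p" if "i < 4" for i
  proof -
    have "y i - y 0 = (y i - x i) + (x i - x 0) - (y 0 - x 0)" by simp
    moreover have "nabs ((y i - x i) + (x i - x 0) - (y 0 - x 0)) \<le> p"
      using that by (intro ultra_le_diff[OF ultra_le[OF d[OF that]] d[of 0]]) (use xc(2) in auto)
    ultimately show ?thesis by simp
  qed
  thus "y \<in> C" using y y0 by (simp add: C_def)
qed

lemma Dz_sc2: "Dz = sc2 ` obox nabs 4"
proof
  show "Dz \<subseteq> sc2 ` obox nabs 4"
  proof
    fix v assume v: "v \<in> Dz"
    define w where "w = (\<lambda>i. v i / 2)"
    have "w \<in> obox nabs 4" using v div2 by (auto simp: Dz_def w_def ob_iff)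
    moreover have "sc2 w = v" using two_ne0 by (simp add: sc2_def w_def)
    ultimately show "v \<in> sc2 ` obox nabs 4" by (metis imageI)
  qed
next
  show "sc2 ` obox nabs 4 \<subseteq> Dz"
  proof
    fix v assume "v \<in> sc2 ` obox nabs 4"
    then obtain w where w: "w \<in> obox nabs 4" "v = sc2 w" by blast
    have "nabs (2 * w i) \<le> p" if "i < 4" for i using w that by (intro two_mult_le) (simp add: ob_iff)
    thus "v \<in> Dz" using sc2_ob[OF w(1)] w by (simp add: Dz_def sc2_def)
  qed
qed

lemma DC_disj: "Dz \<inter> C = {}" unfolding Dz_def C_def using p_lt1 by (auto dest!: spec[of _ 0])

lemma cnt_Dz: "cnt 4 1 Dz = 1"
proof -
  have "Dz = {x\<in>obox nabs 4. \<forall>i<4. x i \<in> {y. nabs y \<le> p}}" by (auto simp: Dz_def)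
  moreover have "card (cl 4 1 ` {x\<in>obox nabs 4. \<forall>i<4. x i \<in> {y. nabs y \<le> p}}) = (\<Prod>i<(4::nat). card (rc ` {y. nabs y \<le> p}))"
    by (rule cnt1_prod[THEN conjunct1]) (use p_lt1 in auto)
  ultimately show ?thesis by (simp add: cnt_def rc_small)
qed

definition units :: "'k set" where "units = {y. nabs y = 1}"

lemma card_rc_units: "card (rc ` units) = q - 1"
proof -
  have "rc ` {y. nabs y \<le> 1} = rc ` units \<union> rc ` {y. nabs y \<le> p}"
    using unit_or p_lt1 by (auto simp: units_def)
  moreover have "rc ` units \<inter> rc ` {y. nabs y \<le> p} = {}"
  proof (rule ccontr)
    assume "rc ` units \<inter> rc ` {y. nabs y \<le> p} \<noteq> {}"
    then obtain y where y: "nabs y = 1" "rc y = rc 0" using rc_small by (auto simp: units_def)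
    hence "nabs y \<le> p" using rc_eq[of y 0] by simp
    thus False using y p_lt1 by simp
  qed
  moreover have "finite (rc ` units)"
  proof (rule finite_subset[OF _ fin_rc])
    show "rc ` units \<subseteq> rc ` ointeg nabs" by (auto simp: units_def ointeg_def)
  qed
  ultimately have "q = card (rc ` units) + 1" using card_rc_o rc_small by (simp add: card_Un_disjoint)
  thus ?thesis by simp
qed

definition C0 :: "(nat \<Rightarrow> 'k) set" where
  "C0 = {x\<in>obox nabs 4. \<forall>i<4. x i \<in> (if i = 0 then units else {y. nabs y \<le> p})}"

lemma cnt_C0: "cnt 4 1 C0 = q - 1"
proof -
  have "cnt 4 1 C0 = (\<Prod>i<(4::nat). card (rc ` (if i = 0 then units else {y. nabs y \<le> p})))"
    unfolding cnt_def C0_def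
    by (rule cnt1_prod[THEN conjunct1]) (auto split: if_splits simp: units_def intro: order_trans[OF _ less_imp_le[OF p_lt1]])
  also have "\<dots> = q - 1" by (simp add: lessThan_nat_numeral rc_small card_rc_units numeral_eq_Suc)
  finally show ?thesis .
qed

definition psi :: "(nat \<Rightarrow> 'k) \<Rightarrow> nat \<Rightarrow> 'k" where
  "psi x = (\<lambda>i. if i = 0 \<or> 4 \<le> i then x i else x i - x 0)"
definition psi' :: "(nat \<Rightarrow> 'k) \<Rightarrow> nat \<Rightarrow> 'k" where
  "psi' x = (\<lambda>i. if i = 0 \<or> 4 \<le> i then x i else x i + x 0)"

lemma psi_ob: "x \<in> obox nabs 4 \<Longrightarrow> psi x \<in> obox nabs 4"
  unfolding ob_iff psi_def by (auto intro!: oI)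
lemma psi'_ob: "x \<in> obox nabs 4 \<Longrightarrow> psi' x \<in> obox nabs 4"
  unfolding ob_iff psi'_def by (auto intro!: oI)
lemma psi_psi': "psi (psi' x) = x" by (auto simp: psi_def psi'_def fun_eq_iff)

lemma psi_vc: assumes "x \<in> obox nabs 4" "y \<in> obox nabs 4"
  shows "vcong nabs 4 m (psi x) (psi y) \<longleftrightarrow> vcong nabs 4 m x y"
proof
  assume h: "vcong nabs 4 m (psi x) (psi y)"
  have h': "nabs (psi x i - psi y i) \<le> p^m" if "i < 4" for i using h that by (simp add: vc)
  have h0: "nabs (x 0 - y 0) \<le> p^m" using h'[of 0] by (simp add: psi_def)
  show "vcong nabs 4 m x y" unfolding vc
  proof (intro allI impI)
    fix i :: nat assume i: "i < 4"
    show "nabs (x i - y i) \<le> p^m"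
    proof (cases "i = 0")
      case True thus ?thesis using h0 by simp
    next
      case False
      have "x i - y i = (psi x i - psi y i) + (x 0 - y 0)" using False i by (simp add: psi_def)
      thus ?thesis using h'[OF i] h0 ultra_le by simp
    qed
  qed
next
  assume h: "vcong nabs 4 m x y"
  have h': "nabs (x i - y i) \<le> p^m" if "i < 4" for i using h that by (simp add: vc)
  show "vcong nabs 4 m (psi x) (psi y)" unfolding vc
  proof (intro allI impI)
    fix i :: nat assume i: "i < 4"
    show "nabs (psi x i - psi y i) \<le> p^m"
    proof (cases "i = 0")
      case True thus ?thesis using h'[of 0] by (simp add: psi_def)
    next
      case False
      have "psi x i - psi y i = (x i - y i) - (x 0 - y 0)" using False i by (simp add: psi_def)
      thus ?thesis using h'[OF i] h'[of 0] ultra_le_diff by simp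
    qed
  qed
qed

lemma psi_C: "psi ` C = C0"
proof
  show "psi ` C \<subseteq> C0"
  proof
    fix y assume "y \<in> psi ` C"
    then obtain x where x: "x \<in> C" "y = psi x" by blast
    have xo: "x \<in> obox nabs 4" "nabs (x 0) = 1" "\<forall>i<4. nabs (x i - x 0) \<le> p" using x by (auto simp: C_def)
    have "\<forall>i<4. y i \<in> (if i = 0 then units else {y. nabs y \<le> p})"
      using xo x by (auto simp: psi_def units_def)
    thus "y \<in> C0" using psi_ob[OF xo(1)] x by (simp add: C0_def)
  qed
next
  show "C0 \<subseteq> psi ` C"
  proof
    fix y assume y: "y \<in> C0"
    have yo: "y \<in> obox nabs 4" using y by (simp add: C0_def)
    have yc: "\<forall>i<4. y i \<in> (if i = 0 then units else {y. nabs y \<le> p})" using y by (simp add: C0_def)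
    define x where "x = psi' y"
    have xo: "x \<in> obox nabs 4" using psi'_ob yo x_def by simp
    have "nabs (x 0) = 1" using yc by (drule_tac x=0 in spec) (simp add: x_def psi'_def units_def)
    moreover have "\<forall>i<4. nabs (x i - x 0) \<le> p"
    proof (intro allI impI)
      fix i :: nat assume i: "i < 4"
      show "nabs (x i - x 0) \<le> p"
      proof (cases "i = 0")
        case True thus ?thesis using p_pos by simp
      next
        case False
        have "y i \<in> {y. nabs y \<le> p}" using yc i False by (drule_tac x=i in spec) simp
        thus ?thesis using False i by (simp add: x_def psi'_def)
      qed
    qed
    ultimately have "x \<in> C" using xo by (simp add: C_def)
    thus "y \<in> psi ` C" using psi_psi' x_def by (metis imageI)
  qed
qed

lemma cnt_C: "cnt 4 1 C = q - 1"
proof -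
  have "cnt 4 1 (psi ` C) = cnt 4 1 C"
    by (rule cnt_map) (use per_C per_sub psi_ob psi_vc in auto)
  thus ?thesis using psi_C cnt_C0 by simp
qed

end



context lfu begin

lemma small_qm: assumes d: "d \<in> obox nabs 4" and x: "\<forall>i<4. nabs (x i) \<le> p"
  shows "\<forall>i<4. nabs (qm d x i) \<le> p"
  using qm_bound[of d x p] d x p_pos by (auto simp: ob_iff)

lemma C_inv: assumes d: "d \<in> obox nabs 4" "nabs (Bf d) = 1" and x: "x \<in> obox nabs 4"
  shows "qm d x \<in> C \<longleftrightarrow> x \<in> C"
proof -
  have qo: "qm d x \<in> obox nabs 4" using qm_ob d x by blast
  have B0: "Bf d \<noteq> 0" using d by auto
  have sm: "(\<forall>i<4. nabs (qm d x i) \<le> p) \<longleftrightarrow> (\<forall>i<4. nabs (x i) \<le> p)"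
  proof
    assume "\<forall>i<4. nabs (qm d x i) \<le> p"
    hence "\<forall>i<4. nabs (qm (qinv d) (qm d x) i) \<le> p" using small_qm qinv_ob d by blast
    thus "\<forall>i<4. nabs (x i) \<le> p" using qm_inv1[OF x B0] by simp
  qed (use small_qm d in blast)
  have "nabs (Bf (qm d x)) = nabs (Bf x)" using d by (simp add: Bf_qm mult)
  thus ?thesis using C_char[OF qo] C_char[OF x] sm by simp
qed

lemma pl: "l \<ge> 1 \<Longrightarrow> p^2 * p^(l-1) = p^(Suc l)"
  by (simp add: power_add[symmetric])

lemma n4_mult: "nabs (4*y) = p^2 * nabs y" by (simp add: mult n4)
lemma four_split: "4 * (y / 4 - c) = y - 4*(c::'k)" using four_ne0 by (simp add: field_simps)

lemma four_split2: "4 * (y - c / 4) = 4*y - (c::'k)" using four_ne0 by (simp add: field_simps)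

lemma four_c: "nabs (Bf x - 4*c) = p^2 * nabs (Bf x / 4 - c)"
  by (metis n4_mult four_split)

lemma cnt_FC: assumes l: "l \<ge> 2" and c: "nabs c = 1"
  shows "cnt 4 (Suc l) {x\<in>C. nabs (Bf x - 4*c) \<le> p^(Suc l)} = q^(3*l+2)"
proof -
  have l1: "l \<ge> 1" using l by simp
  have key: "nabs (Bf x - 4*c') \<le> p^(Suc l) \<longleftrightarrow> nabs (Bf x / 4 - c') \<le> p^(l-1)" for x c'
  proof -
    have "p^2 > 0" using p_pos by simp
    thus ?thesis unfolding four_c pl[OF l1, symmetric] by (rule mult_le_cancel_left_pos)
  qed
  have eqset: "{x\<in>C. nabs (Bf x / 4 - c') \<le> p^(l-1)} = {x\<in>C. nabs (Bf x - 4*c') \<le> p^(Suc l)}" for c'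
    using key by blast
  have shift: "cnt 4 (Suc l) {x\<in>C. nabs (Bf x - 4*c') \<le> p^(Suc l)} = cnt 4 (Suc l) {x\<in>C. nabs (Bf x - 4) \<le> p^(Suc l)}"
    if c': "nabs c' = 1" for c'
  proof -
    obtain d where d: "d \<in> obox nabs 4" "nabs (Bf d - c') \<le> p^(l-1)" using nrd_surj c' by blast
    have d1: "nabs (Bf d) = 1"
    proof -
      have "p^(Suc (l-2)) < 1" by (rule psuc_lt1)
      hence "p^(l-1) < 1" using l by (simp add: Suc_diff_Suc numeral_2_eq_2)
      thus ?thesis using ultra_eq[of "Bf d - c'" c'] d c' by simp
    qed
    have r: "nabs (Bf d * 4 - 4 * c') \<le> p^(Suc l)"
    proof -
      have "Bf d * 4 - 4 * c' = 4 * (Bf d - c')" by (simp add: algebra_simps)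
      hence "nabs (Bf d * 4 - 4 * c') = p^2 * nabs (Bf d - c')" by (metis n4_mult)
      also have "\<dots> \<le> p^2 * p^(l-1)" using d p_pos by simp
      finally show ?thesis using pl[OF l1] by simp
    qed
    show ?thesis
      by (rule Lmap[OF d(1) d1 _ _ r]) (use C_inv d d1 in \<open>auto simp: C_def\<close>)
  qed
  define N where "N = cnt 4 (Suc l) {x\<in>C. nabs (Bf x - 4) \<le> p^(Suc l)}"
  have "cnt 4 (Suc l) C = N * cnt 1 (l-1) U1"
  proof (rule count_by_value)
    show "C \<subseteq> obox nabs 4" by (auto simp: C_def)
    show "U1 \<subseteq> obox nabs 1" by (auto simp: U1_def)
    show "vec1 (Bf x / 4) \<in> U1" if "x \<in> C" for x
      using C_Bf[OF that] p_pos by (simp add: U1_def vec1_def ob_iff ndiv n4)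
    show "nabs (Bf x / 4 - Bf y / 4) \<le> p^(l-1)" if "x \<in> C" "y \<in> C" "vcong nabs 4 (Suc l) x y" for x y
    proof -
      have "nabs (Bf x - Bf y) \<le> p^(Suc l)" by (rule Bf_cong) (use that in \<open>auto simp: C_def\<close>)
      moreover have e: "4 * (Bf y / 4) = Bf y" using four_ne0 by simp
      have "nabs (Bf x - Bf y) = p^2 * nabs (Bf x/4 - Bf y/4)" using four_c[of x "Bf y/4"] e by simp
      ultimately have "p^2 * nabs (Bf x / 4 - Bf y / 4) \<le> p^2 * p^(l-1)" using pl[OF l1] by simp
      thus ?thesis using p_pos by simp
    qed
    fix c' assume "vec1 c' \<in> U1"
    hence c': "nabs c' = 1" by (simp add: U1_def vec1_def)
    show "cnt 4 (Suc l) {x\<in>C. nabs (Bf x / 4 - c') \<le> p^(l-1)} = N"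
      unfolding eqset using shift[OF c'] N_def by simp
  qed
  moreover have "cnt 4 (Suc l) C = q^(4*l) * (q - 1)" using cnt_add_eq[OF per_C, of l] cnt_C by simp
  moreover have "cnt 1 (l-1) U1 = q^(l-1) - q^(l-2)"
    using cnt_U1[of "l-2"] l by (simp add: Suc_diff_Suc numeral_2_eq_2)
  moreover have "q^(l-1) - q^(l-2) = q^(l-2) * (q - 1)"
  proof -
    have "l - 1 = Suc (l-2)" using l by simp
    thus ?thesis by (simp add: algebra_simps)
  qed
  ultimately have "N * q^(l-2) * (q - 1) = q^(l-2) * q^(3*l+2) * (q - 1)"
  proof -
    assume h: "cnt 4 (Suc l) C = N * cnt 1 (l - 1) U1" "cnt 4 (Suc l) C = q ^ (4 * l) * (q - 1)"
      "cnt 1 (l - 1) U1 = q ^ (l - 1) - q ^ (l - 2)" "q ^ (l - 1) - q ^ (l - 2) = q ^ (l - 2) * (q - 1)"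
    have "4*l = (l-2) + (3*l+2)" using l by simp
    hence "q^(4*l) = q^(l-2) * q^(3*l+2)" by (metis power_add)
    thus ?thesis using h by (simp add: algebra_simps)
  qed
  moreover have "q - 1 > 0" "q^(l-2) > 0" using q_ge2 by auto
  ultimately have "N = q^(3*l+2)" by simp
  thus ?thesis using shift[OF c] N_def by simp
qed

lemma per_Int: "per n m A \<Longrightarrow> per n m B \<Longrightarrow> per n m (A \<inter> B)"
  unfolding per_def by blast

lemma Bf_sc2: "Bf (sc2 w) = 4 * Bf w"
  unfolding Bf_def sc2_def by (simp add: algebra_simps power2_eq_square)

lemma Dz_Bf: "x \<in> Dz \<Longrightarrow> nabs (Bf x) \<le> p^2"
proof -
  assume "x \<in> Dz"
  then obtain w where w: "w \<in> obox nabs 4" "x = sc2 w" using Dz_sc2 by blast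
  have "nabs (Bf w) \<le> 1" using Bf_int ob4' w by blast
  thus ?thesis using w p_pos by (simp add: Bf_sc2 mult n4 mult_left_le)
qed

lemma M0: assumes r: "nabs \<rho> \<le> p^2" shows "cnt 4 1 (E 0 \<rho>) = q^3"
proof -
  have "E 0 \<rho> = V"
  proof -
    have "nabs (Bf x - \<rho>) \<le> p \<longleftrightarrow> nabs (Bf x) \<le> p" for x
    proof
      assume "nabs (Bf x - \<rho>) \<le> p"
      hence "nabs ((Bf x - \<rho>) + \<rho>) \<le> p" using r pp2 by (intro ultra_le) auto
      thus "nabs (Bf x) \<le> p" by simp
    qed (use r pp2 ultra_le_diff in auto)
    thus ?thesis by (auto simp: E_def V_def)
  qed
  thus ?thesis using cnt_V by simp
qed

lemma M1: assumes r: "nabs \<rho> \<le> p^2" shows "cnt 4 2 (E 1 \<rho>) = q^5"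
proof -
  have "E 1 \<rho> = Dz \<union> C"
  proof -
    have "nabs (Bf x - \<rho>) \<le> p^2 \<longleftrightarrow> nabs (Bf x) \<le> p^2" for x
    proof
      assume "nabs (Bf x - \<rho>) \<le> p^2"
      hence "nabs ((Bf x - \<rho>) + \<rho>) \<le> p^2" using r by (intro ultra_le) auto
      thus "nabs (Bf x) \<le> p^2" by simp
    qed (use r ultra_le_diff in auto)
    moreover have "x \<in> Dz \<union> C \<longleftrightarrow> nabs (Bf x) \<le> p^2" if "x \<in> obox nabs 4" for x
      using Dz_Bf C_Bf not_DC[OF that] by force
    ultimately show ?thesis unfolding E_def by (auto simp: Dz_def C_def power2_eq_square)
  qed
  moreover have "per 4 1 (Dz \<union> C)" using per_Dz per_C unfolding per_def by blast
  hence "cnt 4 (1+1) (Dz \<union> C) = q^(4*1) * cnt 4 1 (Dz \<union> C)" by (rule cnt_add_eq)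
  moreover have "cnt 4 1 (Dz \<union> C) = 1 + (q - 1)" using cnt_union[OF per_Dz per_C DC_disj] cnt_Dz cnt_C by simp
  ultimately show ?thesis using q_ge2 by (simp add: numeral_eq_Suc)
qed

lemma M2: assumes l: "l \<ge> 2" and r: "nabs \<rho> \<le> p^2"
  shows "cnt 4 (Suc l) (E l \<rho>) = q^4 * cnt 4 (l-1) (E (l-2) (\<rho>/4)) + (if nabs \<rho> = p^2 then q^(3*l+2) else 0)"
proof -
  have pl2: "p^(Suc l) \<le> p^2" using ppow_le_iff[of "Suc l" 2] l by simp
  have sub: "E l \<rho> \<subseteq> Dz \<union> C"
  proof
    fix x assume x: "x \<in> E l \<rho>"
    have xo: "x \<in> obox nabs 4" "nabs (Bf x - \<rho>) \<le> p^(Suc l)" using x by (auto simp: E_def)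
    show "x \<in> Dz \<union> C"
    proof (rule ccontr)
      assume "x \<notin> Dz \<union> C"
      hence "p^2 < nabs (Bf x)" using not_DC xo by blast
      hence "nabs (Bf x - \<rho>) = nabs (Bf x)" using r ultra_eq_diff by simp
      thus False using xo pl2 \<open>p^2 < nabs (Bf x)\<close> by simp
    qed
  qed
  hence spl: "E l \<rho> = (E l \<rho> \<inter> Dz) \<union> (E l \<rho> \<inter> C)" by blast
  have perD: "per 4 (Suc l) (E l \<rho> \<inter> Dz)" using per_Int per_E per_mono[OF per_Dz] by simp
  have perC: "per 4 (Suc l) (E l \<rho> \<inter> C)" using per_Int per_E per_mono[OF per_C] by simp
  have "cnt 4 (Suc l) (E l \<rho>) = cnt 4 (Suc l) (E l \<rho> \<inter> Dz) + cnt 4 (Suc l) (E l \<rho> \<inter> C)"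
    using spl cnt_union[OF perD perC] DC_disj by (metis Int_assoc Int_empty_right Int_left_commute)
  moreover have "E l \<rho> \<inter> Dz = sc2 ` E (l-2) (\<rho>/4)"
  proof
    show "E l \<rho> \<inter> Dz \<subseteq> sc2 ` E (l-2) (\<rho>/4)"
    proof
      fix x assume x: "x \<in> E l \<rho> \<inter> Dz"
      then obtain w where w: "w \<in> obox nabs 4" "x = sc2 w" using Dz_sc2 by blast
      have A: "nabs (4 * Bf w - \<rho>) \<le> p^(Suc l)" using x w by (simp add: E_def Bf_sc2)
      have B: "nabs (4 * Bf w - \<rho>) = p^2 * nabs (Bf w - \<rho>/4)" by (metis four_split2 n4_mult)
      have Cc: "p^(Suc l) = p^2 * p^(Suc (l-2))"
      proof -
        have "Suc l = 2 + Suc (l-2)" using l by simp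
        thus ?thesis by (metis power_add)
      qed
      have "p^2 * nabs (Bf w - \<rho>/4) \<le> p^2 * p^(Suc (l-2))" using A unfolding B Cc .
      hence "nabs (Bf w - \<rho>/4) \<le> p^(Suc (l-2))" using p_pos by simp
      thus "x \<in> sc2 ` E (l-2) (\<rho>/4)" using w by (auto simp: E_def)
    qed
  next
    show "sc2 ` E (l-2) (\<rho>/4) \<subseteq> E l \<rho> \<inter> Dz"
    proof
      fix x assume "x \<in> sc2 ` E (l-2) (\<rho>/4)"
      then obtain w where w: "w \<in> obox nabs 4" "nabs (Bf w - \<rho>/4) \<le> p^(Suc (l-2))" "x = sc2 w" by (auto simp: E_def)
      have "nabs (4 * Bf w - \<rho>) = p^2 * nabs (Bf w - \<rho>/4)" by (metis four_split2 n4_mult)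
      also have "\<dots> \<le> p^2 * p^(Suc (l-2))" using w p_pos by simp
      also have "\<dots> = p^(Suc l)"
      proof -
        have "Suc l = 2 + Suc (l-2)" using l by simp
        thus ?thesis by (metis power_add)
      qed
      finally have "nabs (Bf x - \<rho>) \<le> p^(Suc l)" using w by (simp add: Bf_sc2)
      moreover have "x \<in> Dz" using Dz_sc2 w by blast
      ultimately show "x \<in> E l \<rho> \<inter> Dz" using sc2_ob w by (auto simp: E_def)
    qed
  qed
  moreover have "cnt 4 (Suc l) (sc2 ` E (l-2) (\<rho>/4)) = q^4 * cnt 4 (l-1) (E (l-2) (\<rho>/4))"
  proof -
    have "cnt 4 (Suc l) (sc2 ` E (l-2) (\<rho>/4)) = cnt 4 l (E (l-2) (\<rho>/4))"
      using cnt_sc2[of "E (l-2) (\<rho>/4)" 4 l] by (auto simp: E_def)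
    also have "\<dots> = cnt 4 (Suc (l-1)) (E (l-2) (\<rho>/4))" using l by simp
    also have "\<dots> = q^4 * cnt 4 (l-1) (E (l-2) (\<rho>/4))"
      using cnt_step_eq[of 4 "l-1" "E (l-2) (\<rho>/4)"] per_E[of "l-2" "\<rho>/4"] l by (simp add: Suc_diff_Suc numeral_2_eq_2)
    finally show ?thesis .
  qed
  moreover have "cnt 4 (Suc l) (E l \<rho> \<inter> C) = (if nabs \<rho> = p^2 then q^(3*l+2) else 0)"
  proof (cases "nabs \<rho> = p^2")
    case True
    define c where "c = \<rho>/4"
    have c1: "nabs c = 1" using True p_pos by (simp add: c_def ndiv n4)
    have "E l \<rho> \<inter> C = {x\<in>C. nabs (Bf x - 4*c) \<le> p^(Suc l)}"
      using four_ne0 by (auto simp: E_def C_def c_def)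
    thus ?thesis using cnt_FC[OF l c1] True by simp
  next
    case False
    hence r3: "nabs \<rho> < p^2" using r by simp
    have "E l \<rho> \<inter> C = {}"
    proof (rule ccontr)
      assume "E l \<rho> \<inter> C \<noteq> {}"
      then obtain x where x: "x \<in> E l \<rho>" "x \<in> C" by blast
      have "nabs (Bf x - \<rho>) = p^2" using ultra_eq_diff[of \<rho> "Bf x"] C_Bf[OF x(2)] r3 by simp
      moreover have "nabs (Bf x - \<rho>) \<le> p^(Suc l)" using x by (simp add: E_def)
      moreover have "p^(Suc l) < p^2" using ppow_lt_iff[of "Suc l" 2] l by simp
      ultimately show False by simp
    qed
    thus ?thesis using False by (simp add: cnt_def)
  qed
  ultimately show ?thesis by simp
qed

end



context lfu begin

abbreviation XX where "XX l \<rho> \<equiv> X_l nabs 4 Bf \<rho> l"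

lemma qp: "real q ^ k * p ^ k = 1"
proof -
  have "real q * p = 1" using pq' by (simp add: mult.commute)
  hence "(real q * p)^k = 1" by simp
  thus ?thesis by (simp add: power_mult_distrib)
qed

lemma X_M: "XX l \<rho> = real (cnt 4 (Suc l) (E l \<rho>)) * p^(4*Suc l)"
proof -
  have "real q ^ (4*Suc l) \<noteq> 0" using q_ge2 by simp
  hence "1 / real q ^ (4*Suc l) = p^(4*Suc l)" using qp[of "4*Suc l"] by (simp add: field_simps)
  moreover have "real (cnt 4 (Suc l) (E l \<rho>)) / real q ^ (4*Suc l) = real (cnt 4 (Suc l) (E l \<rho>)) * (1 / real q ^ (4*Suc l))"
    by simp
  ultimately show ?thesis using X_E[of \<rho> l] by simp
qed

lemma X0: "nabs \<rho> \<le> p^2 \<Longrightarrow> XX 0 \<rho> = p"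
proof -
  assume r: "nabs \<rho> \<le> p^2"
  have "XX 0 \<rho> = real q^3 * p^4" using X_M[of \<rho> 0] M0[OF r] by simp
  also have "\<dots> = (real q^3 * p^3) * p" by (simp add: power_Suc[symmetric] numeral_eq_Suc)
  also have "\<dots> = p" using qp[of 3] by simp
  finally show ?thesis .
qed

lemma X1: "nabs \<rho> \<le> p^2 \<Longrightarrow> XX 1 \<rho> = p^3"
proof -
  assume r: "nabs \<rho> \<le> p^2"
  have "XX 1 \<rho> = real q^5 * p^8" using X_M[of \<rho> 1] M1[OF r] by (simp add: numeral_eq_Suc)
  also have "\<dots> = (real q^5 * p^5) * p^3" by (simp add: power_add[symmetric])
  also have "\<dots> = p^3" using qp[of 5] by simp
  finally show ?thesis .
qed

lemma X2: assumes l: "l \<ge> 2" and r: "nabs \<rho> \<le> p^2"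
  shows "XX l \<rho> = p^4 * XX (l-2) (\<rho>/4) + (if nabs \<rho> = p^2 then p^(l+2) else 0)"
proof -
  obtain j where j: "l = j + 2" using l by (metis add.commute le_iff_add)
  define M' where "M' = cnt 4 (Suc j) (E j (\<rho>/4))"
  have M: "cnt 4 (Suc l) (E l \<rho>) = q^4 * M' + (if nabs \<rho> = p^2 then q^(3*l+2) else 0)"
    using M2[OF l r] j by (simp add: M'_def)
  have X': "XX (l-2) (\<rho>/4) = real M' * p^(4*Suc j)" using X_M j M'_def by simp
  have a: "real (q^4 * M') * p^(4*Suc l) = p^4 * (real M' * p^(4*Suc j))"
  proof -
    have "4 * Suc l = 4 + (4 + 4*Suc j)" using j by simp
    hence e1: "p^(4*Suc l) = p^4 * p^4 * p^(4*Suc j)" by (simp add: power_add)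
    have "real (q^4 * M') * p^(4*Suc l) = (real q^4 * p^4) * (p^4 * (real M' * p^(4*Suc j)))"
      unfolding e1 by (simp add: algebra_simps)
    thus ?thesis using qp[of 4] by simp
  qed
  have b: "real (q^(3*l+2)) * p^(4*Suc l) = p^(l+2)"
  proof -
    have "4 * Suc l = (3*l+2) + (l+2)" by simp
    hence e1: "p^(4*Suc l) = p^(3*l+2) * p^(l+2)" by (metis power_add)
    have "real (q^(3*l+2)) * p^(4*Suc l) = (real q^(3*l+2) * p^(3*l+2)) * p^(l+2)"
      by (simp only: e1 of_nat_power mult.assoc)
    thus ?thesis by (simp only: qp mult_1_left)
  qed
  show ?thesis using X_M[of \<rho> l] M X' a b by (auto simp: algebra_simps)
qed

definition F :: "nat \<Rightarrow> nat \<Rightarrow> real" where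
  "F T l = p^(1+2*l) + (if 2*T \<le> l then p^(4*T) * ((1+p)*p^(l-2*T) - p^(1+2*(l-2*T))) else 0)"

lemma nsq: "nabs (t^2) = nabs t ^ 2" by simp

lemma closed: "t \<noteq> 0 \<Longrightarrow> nabs t = p^(Suc n) \<Longrightarrow> XX l (t^2) = F (Suc n) l"
proof (induction n arbitrary: t l)
  case 0
  have r: "nabs (t^2) = p^2" using 0 by (simp add: power2_eq_square mult)
  consider "l = 0" | "l = 1" | "l \<ge> 2" by linarith
  thus ?case
  proof cases
    case 1 thus ?thesis using X0 r by (simp add: F_def)
  next
    case 2 thus ?thesis using X1 r by (simp add: F_def numeral_3_eq_3)
  next
    case 3
    obtain j where j: "l = j + 2" using 3 by (metis add.commute le_iff_add)
    have t2: "t^2/4 = (t/2)^2" by (simp add: power2_eq_square)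
    have u2: "nabs ((t/2)^2) = 1" using 0 p_pos by (simp add: ndiv n2)
    have "XX l (t^2) = p^4 * XX (l-2) (t^2/4) + p^(l+2)" using X2[OF 3, of "t^2"] r by simp
    hence "XX l (t^2) = p^4 * XX j ((t/2)^2) + p^(l+2)" unfolding t2 using j by simp
    also have "\<dots> = p^4 * p^(Suc j) + p^(l+2)" using X_unit[OF u2] by simp
    also have "\<dots> = F 1 l"
    proof -
      have "F 1 l = p^(5+2*j) + p^4 * ((1+p)*p^j - p^(1+2*j))" using j by (simp add: F_def power_add numeral_eq_Suc)
      also have "\<dots> = p^4 * p^(Suc j) + p^(l+2)" using j by (simp add: algebra_simps power_add numeral_eq_Suc)
      finally show ?thesis by simp
    qed
    finally show ?thesis by simp
  qed
next
  case (Suc n)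
  have "nabs (t^2) = (p^(Suc (Suc n)))^2" using Suc.prems by simp
  hence r: "nabs (t^2) = p^(2*Suc (Suc n))" by (metis power_mult mult.commute)
  have r2: "nabs (t^2) \<le> p^2" using r ppow_le_iff[of "2*Suc (Suc n)" 2] by simp
  have r3: "nabs (t^2) \<noteq> p^2" using r ppow_lt_iff[of "2*Suc (Suc n)" 2] by auto
  consider "l = 0" | "l = 1" | "l \<ge> 2" by linarith
  thus ?case
  proof cases
    case 1 thus ?thesis using X0 r2 by (simp add: F_def)
  next
    case 2 thus ?thesis using X1 r2 by (simp add: F_def numeral_3_eq_3)
  next
    case 3
    obtain j where j: "l = j + 2" using 3 by (metis add.commute le_iff_add)
    have t2: "t^2/4 = (t/2)^2" by (simp add: power2_eq_square)
    have th: "t/2 \<noteq> 0" "nabs (t/2) = p^(Suc n)" using Suc.prems two_ne0 p_pos by (auto simp: ndiv n2)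
    have "XX l (t^2) = p^4 * XX (l-2) (t^2/4)" using X2[OF 3 r2] r3 by simp
    hence "XX l (t^2) = p^4 * XX j ((t/2)^2)" unfolding t2 using j by simp
    also have "\<dots> = p^4 * F (Suc n) j" using Suc.IH[OF th] by simp
    also have "\<dots> = F (Suc (Suc n)) l"
    proof (cases "2 * Suc n \<le> j")
      case True
      obtain i where i: "j = 2 * Suc n + i" using True le_Suc_ex by blast
      have "l - 2 * Suc (Suc n) = i" "j - 2 * Suc n = i" using i j by simp_all
      thus ?thesis using True i j by (simp add: F_def algebra_simps power_add numeral_eq_Suc)
    next
      case False
      thus ?thesis using j by (simp add: F_def algebra_simps power_add numeral_eq_Suc)
    qed
    finally show ?thesis .
  qed
qed

end



lemma final_alg:
  fixes z P Q :: complex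
  assumes QP: "Q * P = 1" and d1: "1 - z*P \<noteq> 0" and d2: "1 - z*P^2 \<noteq> 0"
  shows "P/(1-z*P^2) + z^(2*T)*P^(4*T)*((1+P)/(1-z*P) - P/(1-z*P^2))
    = P/(1 - (z*P)/Q) + (z*P)^(2*T)/Q^(2*T) * (1 - (z*P)/Q^2)/((1 - z*P)*(1 - (z*P)/Q))"
proof -
  have P0: "P \<noteq> 0" "Q \<noteq> 0" using QP by auto
  have Qi: "Q = 1/P" using QP P0 by (simp add: field_simps)
  have e1: "(z*P)/Q = z*P^2" using Qi by (simp add: power2_eq_square)
  have e2: "(z*P)^(2*T)/Q^(2*T) = z^(2*T)*P^(4*T)"
  proof -
    have "(z*P)^(2*T)/Q^(2*T) = z^(2*T)*P^(2*T)*P^(2*T)" using Qi by (simp add: power_mult_distrib power_one_over)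
    also have "\<dots> = z^(2*T)*P^(4*T)" by (simp add: power_add[symmetric])
    finally show ?thesis .
  qed
  have e3: "(z*P)/Q^2 = z*P^3" using Qi by (simp add: power2_eq_square power3_eq_cube)
  have key: "(1+P)/(1-z*P) - P/(1-z*P^2) = (1 - z*P^3)/((1-z*P)*(1-z*P^2))"
    using d1 d2 by (simp add: field_simps power2_eq_square power3_eq_cube)
  show ?thesis unfolding e1 e2 e3 key by (simp add: field_simps)
qed

theorem proposition8p1:
  fixes nabs :: "'k::field \<Rightarrow> real" and a u t :: 'k and B :: "(nat \<Rightarrow> 'k) \<Rightarrow> 'k"
    and T q :: nat and \<beta> z w :: complex
  assumes k: "unram_2adic_local_field nabs"
    and q: "q = residue_card nabs"
    and u: "nabs u = 1" and a: "a = 1 + 2 * u" and hil: "hilbert_symbol a (-1) = -1"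
    and B: "B = (\<lambda>x. x 0 ^ 2 + x 1 ^ 2 - a * (x 2 ^ 2 + x 3 ^ 2))"
    and \<beta>: "Re \<beta> > 0"
    and z: "z = of_real (real q) powr (-\<beta>)" and w: "w = z / of_nat q"
    and t: "t \<noteq> 0" "nabs t \<le> 1" "nabs t = (1 / real q) ^ T"
  shows "(\<lambda>l. z ^ l * of_real (X_l nabs 4 B 1 l)) sums (of_real (nabs 2) / (1 - w)) \<and>
    (T \<ge> 1 \<longrightarrow>
      (\<lambda>l. z ^ l * of_real (X_l nabs 4 B (t ^ 2) l)) sums
        (of_real (nabs 2) / (1 - w / of_nat q)
         + w ^ (2 * T) / of_nat q ^ (2 * T) * (1 - w / of_nat q ^ 2)
             / ((1 - w) * (1 - w / of_nat q))))"
proof -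
  interpret L: lfu nabs u
    by unfold_locales (use k u hil a in auto)
  have BB: "B = L.Bf" using B a by (simp add: L.Bf_def L.a_def fun_eq_iff)
  have pq: "L.p = 1 / real q" using L.pq q by simp
  have qge: "q \<ge> 2" using L.q_ge2 q by simp
  have n2: "nabs 2 = L.p" by (simp add: L.p_def)
  define P where "P = complex_of_real L.p"
  have QP: "of_nat q * P = 1" using pq qge by (simp add: P_def)
  have iq: "inverse (of_nat q :: complex) = P" using QP by (rule inverse_unique)
  have wP: "w = z * P" using w iq by (simp add: divide_inverse)
  have nz: "norm z < 1"
  proof -
    have "norm z = Re (of_real (real q)) powr Re (-\<beta>)" unfolding z
      by (rule norm_powr_real_powr) auto
    also have "\<dots> = real q powr (- Re \<beta>)" by simp
    also have "\<dots> < 1" using qge \<beta> by (intro powr_less_one) auto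
    finally show ?thesis .
  qed
  have nP: "norm P < 1" "norm P \<ge> 0" using L.p_lt1 L.p_pos by (auto simp: P_def)
  have lt1: "norm (z * P^k) < 1" for k
  proof -
    have "norm (P^k) \<le> 1" using nP by (simp add: norm_power power_le_one)
    hence "norm z * norm (P^k) \<le> norm z" by (simp add: mult_left_le)
    thus ?thesis using nz by (simp add: norm_mult)
  qed
  have d1: "1 - z*P \<noteq> 0" using lt1[of 1] by auto
  have d2: "1 - z*P^2 \<noteq> 0" using lt1[of 2] by auto
  have part1: "(\<lambda>l. z ^ l * of_real (X_l nabs 4 B 1 l)) sums (of_real (nabs 2) / (1 - w))"
  proof -
    have "X_l nabs 4 B 1 l = L.p^(Suc l)" for l using L.X_unit[of 1 l] BB by simp
    hence e: "(\<lambda>l. z ^ l * of_real (X_l nabs 4 B 1 l)) = (\<lambda>l. P * (z*P)^l)"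
      by (simp add: P_def power_mult_distrib fun_eq_iff)
    have "(\<lambda>l. (z*P)^l) sums (1 / (1 - z*P))" using geometric_sums[OF lt1[of 1]] by simp
    hence "(\<lambda>l. P * (z*P)^l) sums (P * (1 / (1 - z*P)))" by (rule sums_mult)
    thus ?thesis unfolding e using wP n2 by (simp add: P_def)
  qed
  have part2: "(\<lambda>l. z ^ l * of_real (X_l nabs 4 B (t ^ 2) l)) sums
        (of_real (nabs 2) / (1 - w / of_nat q)
         + w ^ (2 * T) / of_nat q ^ (2 * T) * (1 - w / of_nat q ^ 2)
             / ((1 - w) * (1 - w / of_nat q)))" if T1: "T \<ge> 1"
  proof -
    obtain n where n: "T = Suc n" using T1 by (metis Suc_pred' less_le_trans zero_less_one)
    have tn: "nabs t = L.p^(Suc n)" using t pq n by simp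
    have X: "X_l nabs 4 B (t^2) l = L.F (Suc n) l" for l using L.closed[OF t(1) tn] BB by simp
    define f1 where "f1 l = P * (z*P^2)^l" for l
    define f2 where "f2 l = (if 2*T \<le> l then z^l * (P^(4*T) * ((1+P)*P^(l-2*T) - P^(1+2*(l-2*T)))) else 0)" for l
    have split: "z ^ l * of_real (X_l nabs 4 B (t ^ 2) l) = f1 l + f2 l" for l
    proof -
      have "of_real (L.F (Suc n) l) = P^(1+2*l) + (if 2*T \<le> l then P^(4*T) * ((1+P)*P^(l-2*T) - P^(1+2*(l-2*T))) else 0)"
        unfolding L.F_def n by (simp add: P_def)
      moreover have "z^l * P^(1+2*l) = P * (z*P^2)^l" by (simp add: power_mult_distrib power_mult[symmetric] power_add)
      ultimately show ?thesis unfolding X f1_def f2_def by (auto simp: algebra_simps)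
    qed
    have s1: "f1 sums (P / (1 - z*P^2))"
    proof -
      have "(\<lambda>l. (z*P^2)^l) sums (1 / (1 - z*P^2))" by (rule geometric_sums[OF lt1[of 2]])
      thus ?thesis unfolding f1_def using sums_mult[of _ _ P] by fastforce
    qed
    define A where "A = z^(2*T) * P^(4*T)"
    have s2: "f2 sums (A * ((1+P)/(1-z*P) - P/(1-z*P^2)))"
    proof -
      have sh: "(\<lambda>i. f2 (i + 2*T)) = (\<lambda>i. A * ((1+P) * (z*P)^i - P * (z*P^2)^i))"
        by (simp add: f2_def A_def fun_eq_iff power_add power_mult_distrib power_mult[symmetric] algebra_simps)
      have g1: "(\<lambda>i. (z*P)^i) sums (1/(1-z*P))" using geometric_sums[OF lt1[of 1]] by simp
      have g2: "(\<lambda>i. (z*P^2)^i) sums (1/(1-z*P^2))" by (rule geometric_sums[OF lt1[of 2]])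
      have "(\<lambda>i. (1+P) * (z*P)^i - P * (z*P^2)^i) sums ((1+P) * (1/(1-z*P)) - P * (1/(1-z*P^2)))"
        by (intro sums_diff sums_mult g1 g2)
      hence "(\<lambda>i. A * ((1+P) * (z*P)^i - P * (z*P^2)^i)) sums (A * ((1+P) * (1/(1-z*P)) - P * (1/(1-z*P^2))))"
        by (rule sums_mult)
      hence "(\<lambda>i. f2 (i + 2*T)) sums (A * ((1+P)/(1-z*P) - P/(1-z*P^2)))" unfolding sh by simp
      moreover have "(\<Sum>i<2*T. f2 i) = 0" by (simp add: f2_def)
      ultimately show ?thesis using sums_iff_shift[of f2 "2*T"] by simp
    qed
    have "(\<lambda>l. f1 l + f2 l) sums (P / (1 - z*P^2) + A * ((1+P)/(1-z*P) - P/(1-z*P^2)))"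
      by (rule sums_add[OF s1 s2])
    moreover have "P / (1 - z*P^2) + A * ((1+P)/(1-z*P) - P/(1-z*P^2)) =
        (of_real (nabs 2) / (1 - w / of_nat q)
         + w ^ (2 * T) / of_nat q ^ (2 * T) * (1 - w / of_nat q ^ 2)
             / ((1 - w) * (1 - w / of_nat q)))"
      unfolding wP A_def using final_alg[OF QP d1 d2, of T] n2 P_def by (simp add: mult.assoc)
    ultimately show ?thesis using split by simp
  qed
  show ?thesis using part1 part2 by blast
qed



end
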